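(* Let $F$ and $G$ be Fourier matrices of the same size $N$ with indexing groups $I_F,I_G$. (a) $F$ and $G$ are equivalent (i.e. $G=SFT^{-1}$ for some $N\times N$ enphased permutation matrices $S,T$) if and only if they are permutation equivalent (i.e. $G=PFR^{-1}$ for some permutation matrices $P,R$), i.e. if and only if $I_F$ and $I_G$ are isomorphic. (b) If $F$ and $G$ are equivalent, then $$\mathrm{Map}_{\mathcal P}(F,G)=\mathrm{Map}_{\mathcal S}(F,G)\cdot\mathrm{Stab}_{\mathcal Z}(F)=\mathrm{Stab}_{\mathcal Z}(G)\cdot\mathrm{Map}_{\mathcal S}(F,G).$$
   Context: For $n\ge1$, $F_n$ is the $n\times n$ matrix with rows and columns indexed by $\mathbb Z_n$ and entries $e^{2\pi i\,\tilde i\tilde j/n}$. A Fourier matrix is $F=F_{N_1}\otimes\cdots\otimes F_{N_r}$ of size $N=N_1\cdots N_r$, indexed by $I_F=\mathbb Z_{N_1}\times\cdots\times\mathbb Z_{N_r}$ with $F_{i,j}=\prod_x(F_{N_x})_{i_x,j_x}$; group indices correspond to ordinary indices via lexicographic order. An enphased permutation matrix is the product of a permutation matrix and a unitary diagonal matrix. Pairs $(S,T)$ of invertible matrices act on $N\times N$ matrices by $(S,T)X=SXT^{-1}$ and are multiplied componentwise. $\mathrm{Map}_{\mathcal P}(F,G)$ is the set of pairs of enphased permutation matrices mapping $F$ to $G$; $\mathrm{Map}_{\mathcal S}(F,G)$ the set of pairs of permutation matrices mapping $F$ to $G$; $\mathrm{Stab}_{\mathcal Z}(F)$ the set of pairs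 of matrices from $\{DZ_k:\ D\text{ unitary diagonal},\ k\in I_F\}$ mapping $F$ to $F$, where $Z_k$ is the permutation matrix with $(Z_k)_{i,i+k}=1$ for $i\in I_F$. Products of sets of pairs are sets of products. *)

theory Defs
  imports "Jordan_Normal_Form.Matrix" "HOL-Algebra.Group" "HOL-Combinatorics.Permutations"
begin

text \<open>A Fourier matrix F = F_{N_1} (x) ... (x) F_{N_r} is described by the list Ns = [N_1,...,N_r].\<close>

definition idx_set :: "nat list \<Rightarrow> nat list set" where
  "idx_set Ns = {xs. length xs = length Ns \<and> (\<forall>x<length Ns. xs ! x < Ns ! x)}"

definition idx_add :: "nat list \<Rightarrow> nat list \<Rightarrow> nat list \<Rightarrow> nat list" where
  "idx_add Ns a b = map (\<lambda>x. (a ! x + b ! x) mod (Ns ! x)) [0..<length Ns]"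

definition idx_group :: "nat list \<Rightarrow> nat list monoid" where
  "idx_group Ns = \<lparr>carrier = idx_set Ns, mult = idx_add Ns, one = replicate (length Ns) 0\<rparr>"

text \<open>Correspondence between ordinary indices 0..N-1 and group indices via lexicographic order
(first coordinate most significant).\<close>

fun to_idx :: "nat list \<Rightarrow> nat \<Rightarrow> nat list" where
  "to_idx [] k = []"
| "to_idx (n # ns) k = (k div prod_list ns) # to_idx ns (k mod prod_list ns)"

definition fourier :: "nat list \<Rightarrow> complex mat" where
  "fourier Ns = mat (prod_list Ns) (prod_list Ns)
     (\<lambda>(i, j). \<Prod>x<length Ns. exp (2 * of_real pi * \<i> * of_nat (to_idx Ns i ! x)
                                      * of_nat (to_idx Ns j ! x) / of_nat (Ns ! x)))"

definition perm_mat :: "nat \<Rightarrow> (nat \<Rightarrow> nat) \<Rightarrow> complex mat" where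
  "perm_mat n \<sigma> = mat n n (\<lambda>(i, j). if \<sigma> j = i then 1 else 0)"

definition perm_mats :: "nat \<Rightarrow> complex mat set" where
  "perm_mats n = {perm_mat n \<sigma> | \<sigma>. \<sigma> permutes {..<n}}"

definition unit_diag_mats :: "nat \<Rightarrow> complex mat set" where
  "unit_diag_mats n = {mat_diag n d | d. \<forall>i<n. cmod (d i) = 1}"

definition enphased_perm_mats :: "nat \<Rightarrow> complex mat set" where
  "enphased_perm_mats n = {P * D | P D. P \<in> perm_mats n \<and> D \<in> unit_diag_mats n}"

definition mat_inv :: "complex mat \<Rightarrow> complex mat" where
  "mat_inv T = (SOME B. inverts_mat T B \<and> inverts_mat B T)"

definition pair_act :: "complex mat \<Rightarrow> complex mat \<Rightarrow> complex mat \<Rightarrow> complex mat" where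
  "pair_act S T X = S * X * mat_inv T"

definition pair_set_prod ::
    "(complex mat \<times> complex mat) set \<Rightarrow> (complex mat \<times> complex mat) set \<Rightarrow> (complex mat \<times> complex mat) set" where
  "pair_set_prod A B = {(S1 * S2, T1 * T2) | S1 T1 S2 T2. (S1, T1) \<in> A \<and> (S2, T2) \<in> B}"

definition Map_P :: "nat \<Rightarrow> complex mat \<Rightarrow> complex mat \<Rightarrow> (complex mat \<times> complex mat) set" where
  "Map_P n F G = {(S, T). S \<in> enphased_perm_mats n \<and> T \<in> enphased_perm_mats n \<and> pair_act S T F = G}"

definition Map_S :: "nat \<Rightarrow> complex mat \<Rightarrow> complex mat \<Rightarrow> (complex mat \<times> complex mat) set" where
  "Map_S n F G = {(S, T). S \<in> perm_mats n \<and> T \<in> perm_mats n \<and> pair_act S T F = G}"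

definition shift_mat :: "nat list \<Rightarrow> nat list \<Rightarrow> complex mat" where
  "shift_mat Ns k = mat (prod_list Ns) (prod_list Ns)
     (\<lambda>(a, b). if to_idx Ns b = idx_add Ns (to_idx Ns a) k then 1 else 0)"

definition DZ_mats :: "nat list \<Rightarrow> complex mat set" where
  "DZ_mats Ns = {D * shift_mat Ns k | D k. D \<in> unit_diag_mats (prod_list Ns) \<and> k \<in> idx_set Ns}"

definition Stab_Z :: "nat list \<Rightarrow> (complex mat \<times> complex mat) set" where
  "Stab_Z Ns = {(S, T). S \<in> DZ_mats Ns \<and> T \<in> DZ_mats Ns \<and> pair_act S T (fourier Ns) = fourier Ns}"

end

theory Submission
  imports Defs "HOL-Analysis.Complex_Transcendental"
begin

definition ee :: "nat \<Rightarrow> nat \<Rightarrow> complex" where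
  "ee n j = exp (2 * of_real pi * \<i> * of_nat j / of_nat n)"

lemma ee_add: "ee n (a + b) = ee n a * ee n b"
  unfolding ee_def by (simp add: add_divide_distrib distrib_left exp_add)

lemma ee_mod: "n \<ge> 1 \<Longrightarrow> ee n (j mod n) = ee n j"
  unfolding ee_def using complex_root_unity_eq[of n "j mod n" j] by simp

lemma ee_inj: "n \<ge> 1 \<Longrightarrow> a < n \<Longrightarrow> b < n \<Longrightarrow> ee n a = ee n b \<Longrightarrow> a = b"
  unfolding ee_def using complex_root_unity_eq[of n a b] by simp

lemma ee_pow: "ee n a ^ k = ee n (a * k)"
proof -
  have "ee n (a * k) = exp (of_nat k * (2 * of_real pi * \<i> * of_nat a / of_nat n))"
    unfolding ee_def by (simp add: algebra_simps)
  also have "\<dots> = ee n a ^ k" unfolding ee_def by (rule exp_of_nat_mult)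
  finally show ?thesis by simp
qed

lemma ee_nz: "ee n a \<noteq> 0" unfolding ee_def by simp
lemma ee_0[simp]: "ee n 0 = 1" unfolding ee_def by simp

lemma ee_roots: "n \<ge> 1 \<Longrightarrow> z ^ n = 1 \<Longrightarrow> \<exists>j<n. z = ee n j"
  using complex_roots_unity[of n] unfolding ee_def by auto

lemma ee_mult_mod: "n \<ge> 1 \<Longrightarrow> ee n (a * (b mod n)) = ee n (a * b)"
  by (metis ee_mod mod_mult_right_eq)

definition chi :: "nat list \<Rightarrow> nat list \<Rightarrow> nat list \<Rightarrow> complex" where
  "chi Ns a b = (\<Prod>x<length Ns. ee (Ns ! x) (a ! x * b ! x))"

lemma fourier_dim[simp]: "fourier Ns \<in> carrier_mat (prod_list Ns) (prod_list Ns)"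
  unfolding fourier_def by simp

lemma fourier_index: "i < prod_list Ns \<Longrightarrow> j < prod_list Ns \<Longrightarrow>
   fourier Ns $$ (i,j) = chi Ns (to_idx Ns i) (to_idx Ns j)"
  unfolding fourier_def chi_def ee_def by (simp add: mult.assoc)

definition allpos :: "nat list \<Rightarrow> bool" where "allpos Ns \<longleftrightarrow> (\<forall>n\<in>set Ns. n \<ge> 1)"

lemma allposD: "allpos Ns \<Longrightarrow> x < length Ns \<Longrightarrow> Ns ! x \<ge> 1"
  unfolding allpos_def by auto

lemma chi_add2:
  assumes "allpos Ns"
  shows "chi Ns a (idx_add Ns b c) = chi Ns a b * chi Ns a c"
  unfolding chi_def prod.distrib[symmetric]
proof (rule prod.cong[OF refl])
  fix x assume "x \<in> {..<length Ns}"
  then have x: "x < length Ns" by simp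
  have "ee (Ns ! x) (a ! x * idx_add Ns b c ! x) = ee (Ns ! x) (a ! x * ((b ! x + c ! x) mod Ns ! x))"
    using x unfolding idx_add_def by simp
  also have "\<dots> = ee (Ns ! x) (a ! x * (b ! x + c ! x))"
    using ee_mult_mod allposD[OF assms x] by blast
  also have "\<dots> = ee (Ns ! x) (a ! x * b ! x) * ee (Ns ! x) (a ! x * c ! x)"
    by (simp add: distrib_left ee_add)
  finally show "ee (Ns ! x) (a ! x * idx_add Ns b c ! x) = ee (Ns ! x) (a ! x * b ! x) * ee (Ns ! x) (a ! x * c ! x)" .
qed

lemma chi_sym: "chi Ns a b = chi Ns b a"
  unfolding chi_def by (simp add: mult.commute)

lemma chi_add1:
  assumes "allpos Ns"
  shows "chi Ns (idx_add Ns b c) a = chi Ns b a * chi Ns c a"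
  using chi_add2[OF assms] chi_sym by metis

lemma chi_nz: "chi Ns a b \<noteq> 0"
  unfolding chi_def by (simp add: ee_nz)

lemma idx_add_length[simp]: "length (idx_add Ns a b) = length Ns"
  unfolding idx_add_def by simp

lemma idx_add_nth[simp]: "x < length Ns \<Longrightarrow> idx_add Ns a b ! x = (a ! x + b ! x) mod Ns ! x"
  unfolding idx_add_def by simp

lemma idx_add_in: "allpos Ns \<Longrightarrow> idx_add Ns a b \<in> idx_set Ns"
  unfolding idx_set_def using allposD by fastforce

definition uv :: "nat list \<Rightarrow> nat \<Rightarrow> nat \<Rightarrow> nat list" where
  "uv Ns x k = map (\<lambda>y. if y = x then k mod (Ns ! y) else 0) [0..<length Ns]"

lemma uv_in: "allpos Ns \<Longrightarrow> uv Ns x k \<in> idx_set Ns"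
  unfolding idx_set_def uv_def using allposD by fastforce

lemma uv_succ: "allpos Ns \<Longrightarrow> idx_add Ns (uv Ns x k) (uv Ns x 1) = uv Ns x (Suc k)"
  unfolding uv_def idx_add_def
  by (auto intro!: nth_equalityI simp: mod_add_eq mod_Suc_eq)

lemma uv_0: "uv Ns x 0 = replicate (length Ns) 0"
  unfolding uv_def by (auto intro!: nth_equalityI)

lemma uv_n: "x < length Ns \<Longrightarrow> uv Ns x (Ns ! x) = replicate (length Ns) 0"
  unfolding uv_def by (auto intro!: nth_equalityI)

lemma chi_uv: assumes "allpos Ns" "x < length Ns"
  shows "chi Ns (uv Ns x 1) a = ee (Ns ! x) (a ! x)"
proof -
  have "chi Ns (uv Ns x 1) a = (\<Prod>y<length Ns. if y = x then ee (Ns ! x) (a ! x) else 1)"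
    unfolding chi_def
  proof (rule prod.cong[OF refl])
    fix y assume "y \<in> {..<length Ns}"
    then show "ee (Ns ! y) (uv Ns x 1 ! y * a ! y) = (if y = x then ee (Ns ! x) (a ! x) else 1)"
      using ee_mult_mod[of "Ns ! x" "a ! x" 1] allposD[OF assms]
      by (auto simp: uv_def mult.commute)
  qed
  also have "\<dots> = ee (Ns ! x) (a ! x)" using assms(2) by (simp add: prod.delta)
  finally show ?thesis .
qed

lemma chi_nondeg:
  assumes "allpos Ns" "a \<in> idx_set Ns" "a' \<in> idx_set Ns"
    and "\<forall>z\<in>idx_set Ns. chi Ns z a = chi Ns z a'"
  shows "a = a'"
proof (rule nth_equalityI)
  show "length a = length a'" using assms(2,3) unfolding idx_set_def by simp
  fix x assume "x < length a"
  then have x: "x < length Ns" using assms(2) unfolding idx_set_def by simp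
  have "ee (Ns ! x) (a ! x) = ee (Ns ! x) (a' ! x)"
    using assms(4) uv_in[OF assms(1)] chi_uv[OF assms(1) x] by metis
  then show "a ! x = a' ! x"
    using ee_inj allposD[OF assms(1) x] assms(2,3) x unfolding idx_set_def by blast
qed


definition pre :: "nat list \<Rightarrow> nat list \<Rightarrow> nat \<Rightarrow> nat list" where
  "pre Ns z k = map (\<lambda>y. if y < k then z ! y else 0) [0..<length Ns]"

lemma zero_in: "allpos Ns \<Longrightarrow> replicate (length Ns) 0 \<in> idx_set Ns"
  unfolding idx_set_def using allposD by fastforce

lemma idx_add_zero: "idx_add Ns (replicate (length Ns) 0) (replicate (length Ns) 0) = replicate (length Ns) 0"
  by (auto intro!: nth_equalityI)

lemma pre_in: "allpos Ns \<Longrightarrow> z \<in> idx_set Ns \<Longrightarrow> pre Ns z k \<in> idx_set Ns"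
  unfolding idx_set_def pre_def using allposD by fastforce

lemma pre_0: "pre Ns z 0 = replicate (length Ns) 0"
  unfolding pre_def by (auto intro!: nth_equalityI)

lemma pre_L: "z \<in> idx_set Ns \<Longrightarrow> pre Ns z (length Ns) = z"
  unfolding pre_def idx_set_def by (auto intro!: nth_equalityI)

lemma pre_Suc: assumes "z \<in> idx_set Ns" "k < length Ns"
  shows "pre Ns z (Suc k) = idx_add Ns (pre Ns z k) (uv Ns k (z ! k))"
proof (rule nth_equalityI)
  show "length (pre Ns z (Suc k)) = length (idx_add Ns (pre Ns z k) (uv Ns k (z ! k)))"
    unfolding pre_def by simp
  fix y assume "y < length (pre Ns z (Suc k))"
  then have y: "y < length Ns" unfolding pre_def by simp
  have zy: "z ! y < Ns ! y" using assms(1) y unfolding idx_set_def by simp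
  show "pre Ns z (Suc k) ! y = idx_add Ns (pre Ns z k) (uv Ns k (z ! k)) ! y"
    using y zy assms(2) unfolding pre_def uv_def by (cases "y < k"; cases "y = k"; simp)
qed

lemma char_rep:
  assumes ap: "allpos Ns"
    and hom: "\<forall>z\<in>idx_set Ns. \<forall>z'\<in>idx_set Ns. c (idx_add Ns z z') = c z * c z'"
    and nz: "\<forall>z\<in>idx_set Ns. c z \<noteq> 0"
  shows "\<exists>w\<in>idx_set Ns. \<forall>z\<in>idx_set Ns. c z = chi Ns z w"
proof -
  define L where "L = length Ns"
  define zr where "zr = replicate L (0::nat)"
  have zr_in: "zr \<in> idx_set Ns" unfolding zr_def L_def using zero_in[OF ap] .
  have "c zr = c zr * c zr" using hom zr_in idx_add_zero[of Ns] unfolding zr_def L_def by metis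
  then have c0: "c zr = 1" using nz zr_in by simp
  have cuv: "c (uv Ns x k) = c (uv Ns x 1) ^ k" for x k
  proof (induction k)
    case 0 then show ?case using c0 uv_0[of Ns x] unfolding zr_def L_def by simp
  next
    case (Suc k)
    have "c (uv Ns x (Suc k)) = c (uv Ns x k) * c (uv Ns x 1)"
      using uv_succ[OF ap, of x k] hom uv_in[OF ap] by metis
    then show ?case using Suc by simp
  qed
  have "\<exists>j. x < L \<longrightarrow> j < Ns ! x \<and> c (uv Ns x 1) = ee (Ns ! x) j" for x
  proof (cases "x < L")
    case True
    have n1: "Ns ! x \<ge> 1" using allposD[OF ap] True unfolding L_def by blast
    have "c (uv Ns x 1) ^ (Ns ! x) = 1"
      using cuv[of x "Ns ! x"] uv_n[of x Ns] True c0 unfolding zr_def L_def by simp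
    then show ?thesis using ee_roots[OF n1] by blast
  qed simp
  then obtain f where f: "\<And>x. x < L \<Longrightarrow> f x < Ns ! x \<and> c (uv Ns x 1) = ee (Ns ! x) (f x)"
    by metis
  define w where "w = map f [0..<L]"
  have w_in: "w \<in> idx_set Ns" unfolding w_def idx_set_def L_def using f L_def by simp
  have pre_c: "z \<in> idx_set Ns \<Longrightarrow> k \<le> L \<Longrightarrow> c (pre Ns z k) = (\<Prod>y<k. c (uv Ns y 1) ^ (z ! y))" for z k
  proof (induction k)
    case 0 then show ?case using c0 pre_0[of Ns z] unfolding zr_def L_def by simp
  next
    case (Suc k)
    then have k: "k < length Ns" unfolding L_def by simp
    have "c (pre Ns z (Suc k)) = c (pre Ns z k) * c (uv Ns k (z ! k))"
      using pre_Suc[OF Suc.prems(1) k] hom pre_in[OF ap Suc.prems(1)] uv_in[OF ap] by metis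
    then show ?case using Suc cuv[of k "z ! k"] by simp
  qed
  show ?thesis
  proof (intro bexI[OF _ w_in] ballI)
    fix z assume z: "z \<in> idx_set Ns"
    have "c z = (\<Prod>y<L. c (uv Ns y 1) ^ (z ! y))"
      using pre_c[OF z, of L] pre_L[OF z] unfolding L_def by simp
    also have "\<dots> = chi Ns z w" unfolding chi_def L_def[symmetric]
    proof (rule prod.cong[OF refl])
      fix y assume "y \<in> {..<L}"
      then have y: "y < L" by simp
      show "c (uv Ns y 1) ^ (z ! y) = ee (Ns ! y) (z ! y * w ! y)"
        using f[OF y] y unfolding w_def by (simp add: ee_pow mult.commute)
    qed
    finally show "c z = chi Ns z w" .
  qed
qed


section \<open>Index bijection\<close>

lemma idx_set_Nil: "idx_set [] = {[]}"
  unfolding idx_set_def by auto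

lemma idx_set_Cons: "xs \<in> idx_set (n # ns) \<longleftrightarrow> (\<exists>a ys. xs = a # ys \<and> a < n \<and> ys \<in> idx_set ns)"
proof
  assume "xs \<in> idx_set (n # ns)"
  then have l: "length xs = Suc (length ns)" and h: "\<forall>x<Suc (length ns). xs ! x < (n # ns) ! x"
    unfolding idx_set_def by auto
  then obtain a ys where xs: "xs = a # ys" by (cases xs) auto
  have "a < n" using h xs by force
  moreover have "ys \<in> idx_set ns" unfolding idx_set_def using l h xs by force
  ultimately show "\<exists>a ys. xs = a # ys \<and> a < n \<and> ys \<in> idx_set ns" using xs by blast
next
  assume "\<exists>a ys. xs = a # ys \<and> a < n \<and> ys \<in> idx_set ns"
  then obtain a ys where "xs = a # ys" "a < n" "ys \<in> idx_set ns" by blast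
  then show "xs \<in> idx_set (n # ns)" unfolding idx_set_def by (auto simp: nth_Cons' less_Suc_eq_0_disj)
qed

lemma allpos_Cons: "allpos (n # ns) \<longleftrightarrow> n \<ge> 1 \<and> allpos ns"
  unfolding allpos_def by simp

lemma prod_pos: "allpos Ns \<Longrightarrow> prod_list Ns \<ge> 1"
  by (induction Ns) (auto simp: allpos_Cons)

lemma to_idx_in: "allpos Ns \<Longrightarrow> k < prod_list Ns \<Longrightarrow> to_idx Ns k \<in> idx_set Ns"
proof (induction Ns arbitrary: k)
  case Nil then show ?case by (simp add: idx_set_Nil)
next
  case (Cons n ns)
  have P: "prod_list ns \<ge> 1" using prod_pos Cons.prems(1) by (simp add: allpos_Cons)
  have "k div prod_list ns < n" using Cons.prems(2) by (simp add: less_mult_imp_div_less)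
  moreover have "to_idx ns (k mod prod_list ns) \<in> idx_set ns"
    using Cons P by (simp add: allpos_Cons)
  ultimately show ?case by (simp add: idx_set_Cons)
qed

lemma to_idx_inj: "allpos Ns \<Longrightarrow> inj_on (to_idx Ns) {..<prod_list Ns}"
proof (induction Ns)
  case Nil then show ?case by (simp add: lessThan_Suc)
next
  case (Cons n ns)
  have P: "prod_list ns \<ge> 1" using prod_pos Cons.prems(1) by (simp add: allpos_Cons)
  have IH: "inj_on (to_idx ns) {..<prod_list ns}" using Cons by (simp add: allpos_Cons)
  show ?case
  proof (rule inj_onI)
    fix k k' assume "to_idx (n # ns) k = to_idx (n # ns) k'"
    then have 1: "k div prod_list ns = k' div prod_list ns"
      and 2: "to_idx ns (k mod prod_list ns) = to_idx ns (k' mod prod_list ns)" by auto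
    have "k mod prod_list ns = k' mod prod_list ns"
      using inj_onD[OF IH 2] P by simp
    with 1 show "k = k'" by (metis div_mult_mod_eq)
  qed
qed

lemma to_idx_surj: "allpos Ns \<Longrightarrow> xs \<in> idx_set Ns \<Longrightarrow> \<exists>k<prod_list Ns. to_idx Ns k = xs"
proof (induction Ns arbitrary: xs)
  case Nil then show ?case by (simp add: idx_set_Nil)
next
  case (Cons n ns)
  have P: "prod_list ns \<ge> 1" using prod_pos Cons.prems(1) by (simp add: allpos_Cons)
  obtain a ys where xs: "xs = a # ys" "a < n" "ys \<in> idx_set ns" using Cons.prems(2) idx_set_Cons by blast
  obtain k' where k': "k' < prod_list ns" "to_idx ns k' = ys" using Cons xs by (auto simp: allpos_Cons)
  define k where "k = a * prod_list ns + k'"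
  have "k < (a + 1) * prod_list ns" unfolding k_def using k' by simp
  also have "\<dots> \<le> n * prod_list ns" using xs(2) by (intro mult_right_mono) auto
  finally have "k < prod_list (n # ns)" by simp
  moreover have "k div prod_list ns = a" "k mod prod_list ns = k'" unfolding k_def using k' P by auto
  ultimately show ?case using xs k' by (intro exI[of _ k]) auto
qed

lemma to_idx_bij: "allpos Ns \<Longrightarrow> bij_betw (to_idx Ns) {..<prod_list Ns} (idx_set Ns)"
  unfolding bij_betw_def using to_idx_inj to_idx_in to_idx_surj by fastforce

section \<open>Matrices\<close>

definition mono_mat :: "nat \<Rightarrow> (nat \<Rightarrow> nat) \<Rightarrow> (nat \<Rightarrow> complex) \<Rightarrow> complex mat" where
  "mono_mat n \<sigma> d = Matrix.mat n n (\<lambda>(i, j). if \<sigma> j = i then d j else 0)"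

lemma mono_dim[simp]: "mono_mat n \<sigma> d \<in> carrier_mat n n"
  unfolding mono_mat_def by simp

lemma mono_dims[simp]: "dim_row (mono_mat n \<sigma> d) = n" "dim_col (mono_mat n \<sigma> d) = n"
  unfolding mono_mat_def by simp_all

lemma mono_index: "i < n \<Longrightarrow> j < n \<Longrightarrow> mono_mat n \<sigma> d $$ (i, j) = (if \<sigma> j = i then d j else 0)"
  unfolding mono_mat_def by simp

lemma perm_mono: "perm_mat n \<sigma> = mono_mat n \<sigma> (\<lambda>_. 1)"
  unfolding perm_mat_def mono_mat_def by simp

lemma perm_diag: "perm_mat n \<sigma> * mat_diag n d = mono_mat n \<sigma> d"
proof -
  have "perm_mat n \<sigma> \<in> carrier_mat n n" unfolding perm_mat_def by simp
  then show ?thesis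
    by (subst mat_diag_mult_right[of _ n n]) (auto simp: mono_mat_def perm_mat_def)
qed

lemma diag_mono: "mat_diag n d * mono_mat n \<rho> (\<lambda>_. 1) = mono_mat n \<rho> (\<lambda>j. d (\<rho> j))"
  by (subst mat_diag_mult_left[of _ n n]) (auto simp: mono_mat_def)

lemma mono_mult:
  assumes "\<forall>j<n. \<tau> j < n"
  shows "mono_mat n \<sigma> d * mono_mat n \<tau> e = mono_mat n (\<sigma> \<circ> \<tau>) (\<lambda>j. d (\<tau> j) * e j)"
proof (rule eq_matI)
  fix i j assume ij: "i < dim_row (mono_mat n (\<sigma> \<circ> \<tau>) (\<lambda>j. d (\<tau> j) * e j))"
    "j < dim_col (mono_mat n (\<sigma> \<circ> \<tau>) (\<lambda>j. d (\<tau> j) * e j))"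
  then have i: "i < n" and j: "j < n" by auto
  have "(mono_mat n \<sigma> d * mono_mat n \<tau> e) $$ (i, j)
     = (\<Sum>k<n. mono_mat n \<sigma> d $$ (i, k) * mono_mat n \<tau> e $$ (k, j))"
    using i j by (simp add: scalar_prod_def row_def col_def atLeast0LessThan)
  also have "\<dots> = (\<Sum>k<n. if k = \<tau> j then (if \<sigma> (\<tau> j) = i then d (\<tau> j) * e j else 0) else 0)"
    by (rule sum.cong) (auto simp: mono_index i j)
  also have "\<dots> = (if \<sigma> (\<tau> j) = i then d (\<tau> j) * e j else 0)"
    using assms j by (simp add: sum.delta')
  finally show "(mono_mat n \<sigma> d * mono_mat n \<tau> e) $$ (i, j) = mono_mat n (\<sigma> \<circ> \<tau>) (\<lambda>j. d (\<tau> j) * e j) $$ (i, j)"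
    using i j by (simp add: mono_index)
qed auto

lemma mono_id: "mono_mat n id (\<lambda>_. 1) = 1\<^sub>m n"
  by (rule eq_matI) (auto simp: mono_index)

definition invn :: "nat \<Rightarrow> complex mat \<Rightarrow> bool" where
  "invn n A \<longleftrightarrow> A \<in> carrier_mat n n \<and> (\<exists>B\<in>carrier_mat n n. A * B = 1\<^sub>m n \<and> B * A = 1\<^sub>m n)"

lemma mat_inv_props:
  assumes "invn n A"
  shows "mat_inv A \<in> carrier_mat n n" "A * mat_inv A = 1\<^sub>m n" "mat_inv A * A = 1\<^sub>m n"
proof -
  obtain B where A: "A \<in> carrier_mat n n" and B: "B \<in> carrier_mat n n" "A * B = 1\<^sub>m n" "B * A = 1\<^sub>m n"
    using assms unfolding invn_def by blast
  have "inverts_mat A B \<and> inverts_mat B A" using A B unfolding inverts_mat_def by auto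
  then have h: "inverts_mat A (mat_inv A) \<and> inverts_mat (mat_inv A) A"
    unfolding mat_inv_def by (rule someI)
  then have 1: "A * mat_inv A = 1\<^sub>m n" and 2: "mat_inv A * A = 1\<^sub>m (dim_row (mat_inv A))"
    using A unfolding inverts_mat_def by auto
  have c: "dim_col (mat_inv A) = n" using arg_cong[OF 1, of dim_col] by simp
  have r: "dim_row (mat_inv A) = n" using arg_cong[OF 2, of dim_col] A by simp
  show "mat_inv A \<in> carrier_mat n n" using r c by auto
  show "A * mat_inv A = 1\<^sub>m n" by (rule 1)
  show "mat_inv A * A = 1\<^sub>m n" using 2 r by simp
qed

lemma mat_inv_unique:
  assumes "invn n A" "B \<in> carrier_mat n n" "A * B = 1\<^sub>m n"
  shows "mat_inv A = B"
proof -
  have A: "A \<in> carrier_mat n n" using assms(1) unfolding invn_def by blast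
  note p = mat_inv_props[OF assms(1)]
  have "mat_inv A = mat_inv A * (A * B)" using assms(3) p(1) by simp
  also have "\<dots> = (mat_inv A * A) * B" using p(1) A assms(2) by (simp add: assoc_mult_mat)
  also have "\<dots> = B" using p(3) assms(2) by simp
  finally show ?thesis .
qed

lemma invn_mono:
  assumes "\<sigma> permutes {..<n}" "\<forall>j<n. d j \<noteq> 0"
  shows "invn n (mono_mat n \<sigma> d)"
proof -
  have pi: "\<forall>j<n. inv_into UNIV \<sigma> j < n" "\<forall>j<n. \<sigma> j < n"
    using assms(1) permutes_in_image[OF permutes_inv[OF assms(1)]] permutes_in_image[OF assms(1)] by auto
  have 1: "mono_mat n \<sigma> d * mono_mat n (inv_into UNIV \<sigma>) (\<lambda>j. inverse (d (inv_into UNIV \<sigma> j))) = 1\<^sub>m n"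
    unfolding mono_mult[OF pi(1)]
    by (rule eq_matI) (auto simp: mono_index permutes_inverses[OF assms(1)] assms(2) pi)
  have 2: "mono_mat n (inv_into UNIV \<sigma>) (\<lambda>j. inverse (d (inv_into UNIV \<sigma> j))) * mono_mat n \<sigma> d = 1\<^sub>m n"
    unfolding mono_mult[OF pi(2)]
    by (rule eq_matI) (auto simp: mono_index permutes_inverses[OF assms(1)] assms(2) pi)
  show ?thesis unfolding invn_def using 1 2 by (intro conjI mono_dim bexI[OF _ mono_dim]) auto
qed

lemma invn_mult:
  assumes "invn n A" "invn n B"
  shows "invn n (A * B)" "mat_inv (A * B) = mat_inv B * mat_inv A"
proof -
  have A: "A \<in> carrier_mat n n" and B: "B \<in> carrier_mat n n" using assms unfolding invn_def by auto
  note a = mat_inv_props[OF assms(1)] and b = mat_inv_props[OF assms(2)]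
  have 1: "(A * B) * (mat_inv B * mat_inv A) = 1\<^sub>m n"
  proof -
    have "(A * B) * (mat_inv B * mat_inv A) = A * (B * (mat_inv B * mat_inv A))"
      using A B a b by (simp add: assoc_mult_mat[of _ n n _ n _ n])
    also have "B * (mat_inv B * mat_inv A) = (B * mat_inv B) * mat_inv A"
      by (rule assoc_mult_mat[OF B b(1) a(1), symmetric])
    finally show ?thesis using a b A by simp
  qed
  have 2: "(mat_inv B * mat_inv A) * (A * B) = 1\<^sub>m n"
  proof -
    have "(mat_inv B * mat_inv A) * (A * B) = mat_inv B * (mat_inv A * (A * B))"
      using A B a b by (simp add: assoc_mult_mat[of _ n n _ n _ n])
    also have "mat_inv A * (A * B) = (mat_inv A * A) * B"
      by (rule assoc_mult_mat[OF a(1) A B, symmetric])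
    finally show ?thesis using a b B by simp
  qed
  show "invn n (A * B)" unfolding invn_def using 1 2 A B a b
    by (intro conjI mult_carrier_mat[of _ n n _ n] bexI[of _ "mat_inv B * mat_inv A"]) auto
  then show "mat_inv (A * B) = mat_inv B * mat_inv A"
    using mat_inv_unique 1 a(1) b(1) by (metis mult_carrier_mat)
qed

lemma pa_comp:
  assumes "A1 \<in> carrier_mat n n" "A2 \<in> carrier_mat n n" "invn n B1" "invn n B2" "X \<in> carrier_mat n n"
  shows "pair_act (A1 * A2) (B1 * B2) X = pair_act A1 B1 (pair_act A2 B2 X)"
proof -
  note b1 = mat_inv_props[OF assms(3)] and b2 = mat_inv_props[OF assms(4)]
  show ?thesis unfolding pair_act_def invn_mult(2)[OF assms(3,4)]
    using assms b1 b2 by (simp add: assoc_mult_mat[of _ n n _ n _ n])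
qed

lemma pa_iff:
  assumes "S \<in> carrier_mat n n" "F \<in> carrier_mat n n" "G \<in> carrier_mat n n" "invn n T"
  shows "pair_act S T F = G \<longleftrightarrow> S * F = G * T"
proof -
  have T: "T \<in> carrier_mat n n" using assms(4) unfolding invn_def by auto
  note t = mat_inv_props[OF assms(4)]
  show ?thesis
  proof
    assume "pair_act S T F = G"
    then have "G * T = S * F * mat_inv T * T" unfolding pair_act_def by simp
    also have "\<dots> = S * F * (mat_inv T * T)" using assms t T by (simp add: assoc_mult_mat[of _ n n _ n _ n])
    also have "\<dots> = S * F" using t assms by simp
    finally show "S * F = G * T" by simp
  next
    assume h: "S * F = G * T"
    have "pair_act S T F = G * T * mat_inv T" unfolding pair_act_def h by simp
    also have "\<dots> = G * (T * mat_inv T)" using assms t T by (simp add: assoc_mult_mat[of _ n n _ n _ n])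
    also have "\<dots> = G" using t assms by simp
    finally show "pair_act S T F = G" .
  qed
qed

lemma pa_carrier: "S \<in> carrier_mat n n \<Longrightarrow> F \<in> carrier_mat n n \<Longrightarrow> invn n T \<Longrightarrow> pair_act S T F \<in> carrier_mat n n"
  unfolding pair_act_def using mat_inv_props(1) by (metis mult_carrier_mat)

lemma pa_cancel:
  assumes "invn n A" "invn n B" "X \<in> carrier_mat n n" "Y \<in> carrier_mat n n"
    "pair_act A B X = pair_act A B Y"
  shows "X = Y"
proof -
  have A: "A \<in> carrier_mat n n" and B: "B \<in> carrier_mat n n" using assms unfolding invn_def by auto
  note a = mat_inv_props[OF assms(1)] and b = mat_inv_props[OF assms(2)]
  have "A * X = pair_act A B Y * B" using pa_iff[OF A assms(3) pa_carrier[OF A assms(4) assms(2)] assms(2)] assms(5) by simp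
  also have "\<dots> = A * Y" using pa_iff[OF A assms(4) pa_carrier[OF A assms(4) assms(2)] assms(2)] by simp
  finally have h: "A * X = A * Y" .
  have "X = mat_inv A * A * X" using a assms(3) by simp
  also have "\<dots> = mat_inv A * (A * X)" by (rule assoc_mult_mat[OF a(1) A assms(3)])
  also have "\<dots> = mat_inv A * (A * Y)" using h by simp
  also have "\<dots> = mat_inv A * A * Y" by (rule assoc_mult_mat[OF a(1) A assms(4), symmetric])
  also have "\<dots> = Y" using a assms(4) by simp
  finally show ?thesis .
qed

lemma mono_left:
  assumes "F \<in> carrier_mat n n" "inj_on \<sigma> {..<n}" "a < n" "j < n" and that: "\<sigma> a < n"
  shows "(mono_mat n \<sigma> d * F) $$ (\<sigma> a, j) = d a * F $$ (a, j)"
proof -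
  have "(mono_mat n \<sigma> d * F) $$ (\<sigma> a, j) = (\<Sum>k<n. mono_mat n \<sigma> d $$ (\<sigma> a, k) * F $$ (k, j))"
    using assms that by (simp add: scalar_prod_def row_def col_def atLeast0LessThan)
  also have "\<dots> = (\<Sum>k<n. if k = a then d a * F $$ (a, j) else 0)"
    by (rule sum.cong) (use assms that in \<open>auto simp: mono_index dest: inj_onD\<close>)
  also have "\<dots> = d a * F $$ (a, j)" using assms by (simp add: sum.delta')
  finally show ?thesis .
qed

lemma mono_right:
  assumes "G \<in> carrier_mat n n" "i < n" "j < n" "\<tau> j < n"
  shows "(G * mono_mat n \<tau> e) $$ (i, j) = G $$ (i, \<tau> j) * e j"
proof -
  have "(G * mono_mat n \<tau> e) $$ (i, j) = (\<Sum>k<n. G $$ (i, k) * mono_mat n \<tau> e $$ (k, j))"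
    using assms by (simp add: scalar_prod_def row_def col_def atLeast0LessThan)
  also have "\<dots> = (\<Sum>k<n. if k = \<tau> j then G $$ (i, \<tau> j) * e j else 0)"
    by (rule sum.cong) (use assms in \<open>auto simp: mono_index\<close>)
  also have "\<dots> = G $$ (i, \<tau> j) * e j" using assms by (simp add: sum.delta')
  finally show ?thesis .
qed

lemma crit:
  assumes s: "\<sigma> permutes {..<n}" and t: "\<tau> permutes {..<n}" and e: "\<forall>j<n. e j \<noteq> 0"
    and F: "F \<in> carrier_mat n n" and G: "G \<in> carrier_mat n n"
  shows "pair_act (mono_mat n \<sigma> d) (mono_mat n \<tau> e) F = G \<longleftrightarrow>
         (\<forall>a<n. \<forall>j<n. G $$ (\<sigma> a, \<tau> j) * e j = d a * F $$ (a, j))"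
proof -
  have inv: "invn n (mono_mat n \<tau> e)" by (rule invn_mono[OF t e])
  have si: "inj_on \<sigma> {..<n}" using permutes_inj_on[OF s] .
  have sin: "\<And>a. a < n \<Longrightarrow> \<sigma> a < n" using permutes_in_image[OF s] by simp
  have tin: "\<And>a. a < n \<Longrightarrow> \<tau> a < n" using permutes_in_image[OF t] by simp
  have "pair_act (mono_mat n \<sigma> d) (mono_mat n \<tau> e) F = G \<longleftrightarrow> mono_mat n \<sigma> d * F = G * mono_mat n \<tau> e"
    by (rule pa_iff[OF mono_dim F G inv])
  also have "\<dots> \<longleftrightarrow> (\<forall>a<n. \<forall>j<n. G $$ (\<sigma> a, \<tau> j) * e j = d a * F $$ (a, j))"
  proof
    assume h: "mono_mat n \<sigma> d * F = G * mono_mat n \<tau> e"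
    show "\<forall>a<n. \<forall>j<n. G $$ (\<sigma> a, \<tau> j) * e j = d a * F $$ (a, j)"
    proof (intro allI impI)
      fix a j assume a: "a < n" and j: "j < n"
      have "d a * F $$ (a, j) = (mono_mat n \<sigma> d * F) $$ (\<sigma> a, j)"
        using mono_left[OF F si a j] sin[OF a] by simp
      also have "\<dots> = G $$ (\<sigma> a, \<tau> j) * e j" unfolding h using mono_right[of G n "\<sigma> a" j \<tau> e, OF G sin[OF a] j tin[OF j]] .
      finally show "G $$ (\<sigma> a, \<tau> j) * e j = d a * F $$ (a, j)" by simp
    qed
  next
    assume h: "\<forall>a<n. \<forall>j<n. G $$ (\<sigma> a, \<tau> j) * e j = d a * F $$ (a, j)"
    show "mono_mat n \<sigma> d * F = G * mono_mat n \<tau> e"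
    proof (rule eq_matI)
      fix i j assume "i < dim_row (G * mono_mat n \<tau> e)" "j < dim_col (G * mono_mat n \<tau> e)"
      then have i: "i < n" and j: "j < n" using G by auto
      define a where "a = inv_into UNIV \<sigma> i"
      have a: "a < n" and ia: "i = \<sigma> a" unfolding a_def
        using permutes_in_image[OF permutes_inv[OF s]] i permutes_inverses[OF s] by auto
      show "(mono_mat n \<sigma> d * F) $$ (i, j) = (G * mono_mat n \<tau> e) $$ (i, j)"
        unfolding ia using mono_left[OF F si a j] sin[OF a] mono_right[of G n "\<sigma> a" j \<tau> e, OF G sin[OF a] j tin[OF j]] h a j
        by simp
    qed (use F G in auto)
  qed
  finally show ?thesis .
qed


section \<open>Translations\<close>

lemma mod_add_inj:
  fixes x y k n :: nat
  assumes "x < n" "y < n" "(x + k) mod n = (y + k) mod n"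
  shows "x = y"
proof -
  have "int ((x + k) mod n) = int ((y + k) mod n)" using assms(3) by simp
  then have "(int x + int k) mod int n = (int y + int k) mod int n" by (simp add: zmod_int)
  then have "int n dvd (int x + int k) - (int y + int k)" by (simp only: mod_eq_dvd_iff)
  then have d: "int n dvd (int x - int y)" by simp
  then obtain q where q: "int x - int y = int n * q" by (auto simp: dvd_def)
  show ?thesis
  proof (cases "q = 0")
    case True then show ?thesis using q by simp
  next
    case False
    then have "\<bar>int n * q\<bar> \<ge> int n" by (simp add: abs_mult mult_le_cancel_left1 int_one_le_iff_zero_less)
    have "\<bar>int x - int y\<bar> < int n" using assms(1,2) by (simp add: abs_if)
    then have "\<bar>int n * q\<bar> < int n" using q by simp
    with \<open>\<bar>int n * q\<bar> \<ge> int n\<close> show ?thesis by linarith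
  qed
qed

definition tr :: "nat list \<Rightarrow> nat list \<Rightarrow> nat \<Rightarrow> nat" where
  "tr Ns k a = (if a < prod_list Ns then inv_into {..<prod_list Ns} (to_idx Ns) (idx_add Ns (to_idx Ns a) k) else a)"

lemma tr_idx:
  assumes "allpos Ns" "a < prod_list Ns"
  shows "to_idx Ns (tr Ns k a) = idx_add Ns (to_idx Ns a) k" "tr Ns k a < prod_list Ns"
proof -
  have b: "bij_betw (to_idx Ns) {..<prod_list Ns} (idx_set Ns)" by (rule to_idx_bij[OF assms(1)])
  have i: "idx_add Ns (to_idx Ns a) k \<in> idx_set Ns" by (rule idx_add_in[OF assms(1)])
  show "to_idx Ns (tr Ns k a) = idx_add Ns (to_idx Ns a) k"
    unfolding tr_def using assms(2) i b by (simp add: bij_betw_inv_into_right)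
  have "inv_into {..<prod_list Ns} (to_idx Ns) (idx_add Ns (to_idx Ns a) k) \<in> {..<prod_list Ns}"
    by (rule inv_into_into) (use b i in \<open>simp add: bij_betw_def\<close>)
  then show "tr Ns k a < prod_list Ns"
    unfolding tr_def using assms(2) by simp
qed

lemma idx_add_inj:
  assumes "allpos Ns" "x \<in> idx_set Ns" "y \<in> idx_set Ns" "idx_add Ns x k = idx_add Ns y k"
  shows "x = y"
proof (rule nth_equalityI)
  show "length x = length y" using assms(2,3) unfolding idx_set_def by simp
  fix i assume "i < length x"
  then have i: "i < length Ns" using assms(2) unfolding idx_set_def by simp
  have "idx_add Ns x k ! i = idx_add Ns y k ! i" using assms(4) by simp
  then have "(x ! i + k ! i) mod Ns ! i = (y ! i + k ! i) mod Ns ! i" using i by simp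
  then show "x ! i = y ! i" using mod_add_inj assms(2,3) i unfolding idx_set_def by blast
qed

lemma tr_permutes:
  assumes "allpos Ns"
  shows "tr Ns k permutes {..<prod_list Ns}"
proof (rule inj_imp_permutes)
  have b: "bij_betw (to_idx Ns) {..<prod_list Ns} (idx_set Ns)" by (rule to_idx_bij[OF assms(1)])
  show "inj_on (tr Ns k) {..<prod_list Ns}"
  proof (rule inj_onI)
    fix a b assume a: "a \<in> {..<prod_list Ns}" and bb: "b \<in> {..<prod_list Ns}" and e: "tr Ns k a = tr Ns k b"
    have "idx_add Ns (to_idx Ns a) k = to_idx Ns (tr Ns k a)" using tr_idx(1)[OF assms, of a k] a by simp
    also have "\<dots> = to_idx Ns (tr Ns k b)" using e by simp
    also have "\<dots> = idx_add Ns (to_idx Ns b) k" using tr_idx(1)[OF assms, of b k] bb by simp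
    finally have "idx_add Ns (to_idx Ns a) k = idx_add Ns (to_idx Ns b) k" .
    then have "to_idx Ns a = to_idx Ns b"
      using idx_add_inj[OF assms] to_idx_in[OF assms] a bb by blast
    then show "a = b" using b a bb unfolding bij_betw_def inj_on_def by blast
  qed
  show "finite {..<prod_list Ns}" by simp
  show "\<And>x. x \<in> {..<prod_list Ns} \<Longrightarrow> tr Ns k x \<in> {..<prod_list Ns}" using tr_idx[OF assms] by simp
  show "\<And>x. x \<notin> {..<prod_list Ns} \<Longrightarrow> tr Ns k x = x" unfolding tr_def by simp
qed

lemma shift_mono:
  assumes "allpos Ns"
  shows "shift_mat Ns k = mono_mat (prod_list Ns) (inv_into UNIV (tr Ns k)) (\<lambda>_. 1)"
proof (rule eq_matI)
  have p: "tr Ns k permutes {..<prod_list Ns}" by (rule tr_permutes[OF assms])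
  have b: "bij_betw (to_idx Ns) {..<prod_list Ns} (idx_set Ns)" by (rule to_idx_bij[OF assms(1)])
  fix i j assume "i < dim_row (mono_mat (prod_list Ns) (inv_into UNIV (tr Ns k)) (\<lambda>_. 1))"
    "j < dim_col (mono_mat (prod_list Ns) (inv_into UNIV (tr Ns k)) (\<lambda>_. 1))"
  then have i: "i < prod_list Ns" and j: "j < prod_list Ns" by auto
  have "(to_idx Ns j = idx_add Ns (to_idx Ns i) k) \<longleftrightarrow> tr Ns k i = j"
  proof
    assume "to_idx Ns j = idx_add Ns (to_idx Ns i) k"
    then have "to_idx Ns j = to_idx Ns (tr Ns k i)" using tr_idx[OF assms i] by simp
    then show "tr Ns k i = j" using b j tr_idx(2)[OF assms i] unfolding bij_betw_def inj_on_def by auto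
  next
    assume "tr Ns k i = j" then show "to_idx Ns j = idx_add Ns (to_idx Ns i) k" using tr_idx[OF assms i] by auto
  qed
  then show "shift_mat Ns k $$ (i, j) = mono_mat (prod_list Ns) (inv_into UNIV (tr Ns k)) (\<lambda>_. 1) $$ (i, j)"
    unfolding shift_mat_def using i j by (simp add: mono_index permutes_inv_eq[OF p])
qed (auto simp: shift_mat_def)

lemma perm_of_bij:
  assumes "bij_betw f {..<n} {..<n}"
  shows "(\<lambda>a. if a < n then f a else a) permutes {..<n}"
proof (rule bij_imp_permutes)
  show "bij_betw (\<lambda>a. if a < n then f a else a) {..<n} {..<n}"
    using assms by (rule bij_betw_cong[THEN iffD1, rotated]) simp
qed simp

lemma mono_cong: "(\<And>j. j < n \<Longrightarrow> \<sigma> j = \<sigma>' j) \<Longrightarrow> (\<And>j. j < n \<Longrightarrow> d j = d' j) \<Longrightarrow> mono_mat n \<sigma> d = mono_mat n \<sigma>' d'"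
  by (rule eq_matI) (auto simp: mono_index)

lemma to_idx_0: "to_idx Ns 0 = replicate (length Ns) 0"
  by (induction Ns) auto

lemma chi_zero1: "chi Ns (replicate (length Ns) 0) b = 1"
  unfolding chi_def by simp

lemma chi_zero2: "chi Ns a (replicate (length Ns) 0) = 1"
  unfolding chi_def by simp


lemma unit_nz: "cmod x = 1 \<Longrightarrow> x \<noteq> 0" by auto

lemma enph_iff: "S \<in> enphased_perm_mats n \<longleftrightarrow>
   (\<exists>\<sigma> d. \<sigma> permutes {..<n} \<and> (\<forall>i<n. cmod (d i) = 1) \<and> S = mono_mat n \<sigma> d)"
proof
  assume "S \<in> enphased_perm_mats n"
  then obtain \<sigma> d where "\<sigma> permutes {..<n}" "\<forall>i<n. cmod (d i) = 1" "S = perm_mat n \<sigma> * mat_diag n d"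
    unfolding enphased_perm_mats_def perm_mats_def unit_diag_mats_def by blast
  then show "\<exists>\<sigma> d. \<sigma> permutes {..<n} \<and> (\<forall>i<n. cmod (d i) = 1) \<and> S = mono_mat n \<sigma> d"
    by (auto simp: perm_diag)
next
  assume "\<exists>\<sigma> d. \<sigma> permutes {..<n} \<and> (\<forall>i<n. cmod (d i) = 1) \<and> S = mono_mat n \<sigma> d"
  then obtain \<sigma> d where h: "\<sigma> permutes {..<n}" "\<forall>i<n. cmod (d i) = 1" "S = perm_mat n \<sigma> * mat_diag n d"
    by (auto simp: perm_diag)
  show "S \<in> enphased_perm_mats n"
    unfolding enphased_perm_mats_def perm_mats_def unit_diag_mats_def using h by blast
qed

lemma enphI: "\<sigma> permutes {..<n} \<Longrightarrow> (\<forall>i<n. cmod (d i) = 1) \<Longrightarrow> mono_mat n \<sigma> d \<in> enphased_perm_mats n"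
  unfolding enph_iff by blast

lemma perm_iff: "P \<in> perm_mats n \<longleftrightarrow> (\<exists>\<sigma>. \<sigma> permutes {..<n} \<and> P = mono_mat n \<sigma> (\<lambda>_. 1))"
  unfolding perm_mats_def by (auto simp: perm_mono)

lemma DZ_form:
  assumes "allpos Ns" "\<forall>i<prod_list Ns. cmod (d i) = 1" "k \<in> idx_set Ns"
  shows "mono_mat (prod_list Ns) (inv_into UNIV (tr Ns k)) (\<lambda>j. d (inv_into UNIV (tr Ns k) j)) \<in> DZ_mats Ns"
proof -
  have eq: "mono_mat (prod_list Ns) (inv_into UNIV (tr Ns k)) (\<lambda>j. d (inv_into UNIV (tr Ns k) j)) = mat_diag (prod_list Ns) d * shift_mat Ns k"
    using shift_mono[OF assms(1), of k] diag_mono[of "prod_list Ns" d] by simp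
  have "mat_diag (prod_list Ns) d \<in> unit_diag_mats (prod_list Ns)" unfolding unit_diag_mats_def using assms(2) by blast
  then show ?thesis unfolding DZ_mats_def eq using assms(3) by blast
qed

lemma DZ_elim:
  assumes "allpos Ns" "S \<in> DZ_mats Ns"
  shows "\<exists>d k. (\<forall>i<prod_list Ns. cmod (d i) = 1) \<and> k \<in> idx_set Ns \<and>
     S = mono_mat (prod_list Ns) (inv_into UNIV (tr Ns k)) (\<lambda>j. d (inv_into UNIV (tr Ns k) j))"
proof -
  obtain D k where D: "D \<in> unit_diag_mats (prod_list Ns)" "k \<in> idx_set Ns" "S = D * shift_mat Ns k"
    using assms(2) unfolding DZ_mats_def by blast
  obtain d where d: "D = mat_diag (prod_list Ns) d" "\<forall>i<prod_list Ns. cmod (d i) = 1"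
    using D(1) unfolding unit_diag_mats_def by blast
  have "S = mono_mat (prod_list Ns) (inv_into UNIV (tr Ns k)) (\<lambda>j. d (inv_into UNIV (tr Ns k) j))"
    using D(3) d(1) shift_mono[OF assms(1), of k] diag_mono[of "prod_list Ns" d] by simp
  then show ?thesis using d(2) D(2) by blast
qed

lemma pair_set_prod_iff: "(S, T) \<in> pair_set_prod A B \<longleftrightarrow>
   (\<exists>S1 T1 S2 T2. S = S1 * S2 \<and> T = T1 * T2 \<and> (S1, T1) \<in> A \<and> (S2, T2) \<in> B)"
  unfolding pair_set_prod_def by auto


context
  fixes Ns Ms :: "nat list" and N :: nat
  assumes apN: "allpos Ns" and apM: "allpos Ms" and N1: "N = prod_list Ns" and N2: "N = prod_list Ms"
begin

lemma N0: "0 < N" using prod_pos[OF apN] N1 by simp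

lemma F_idx: "i < N \<Longrightarrow> j < N \<Longrightarrow> fourier Ns $$ (i, j) = chi Ns (to_idx Ns i) (to_idx Ns j)"
  using fourier_index N1 by simp

lemma G_idx: "i < N \<Longrightarrow> j < N \<Longrightarrow> fourier Ms $$ (i, j) = chi Ms (to_idx Ms i) (to_idx Ms j)"
  using fourier_index N2 by simp

lemma F_car: "fourier Ns \<in> carrier_mat N N" using N1 by simp
lemma G_car: "fourier Ms \<in> carrier_mat N N" using N2 by simp

lemma G0: "k < N \<Longrightarrow> fourier Ms $$ (0, k) = 1" "k < N \<Longrightarrow> fourier Ms $$ (k, 0) = 1"
  using G_idx N0 by (simp_all add: to_idx_0 chi_zero1 chi_zero2)

lemma tr_N: "a < N \<Longrightarrow> to_idx Ns (tr Ns k a) = idx_add Ns (to_idx Ns a) k" "a < N \<Longrightarrow> tr Ns k a < N"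
  using tr_idx[OF apN] N1 by auto

lemma claimA:
  assumes s: "\<sigma> permutes {..<N}" and t: "\<tau> permutes {..<N}" and d: "\<forall>i<N. d i \<noteq> 0"
    and h: "\<forall>a<N. \<forall>j<N. fourier Ms $$ (\<sigma> a, \<tau> j) * e j = d a * fourier Ns $$ (a, j)"
  shows "\<forall>a<N. \<forall>j<N. fourier Ms $$ (\<sigma> (tr Ns (to_idx Ns (inv_into UNIV \<sigma> 0)) a),
                                   \<tau> (tr Ns (to_idx Ns (inv_into UNIV \<tau> 0)) j)) = fourier Ns $$ (a, j)"
proof (intro allI impI)
  define a0 where "a0 = inv_into UNIV \<sigma> 0"
  define j0 where "j0 = inv_into UNIV \<tau> 0"
  have a0: "a0 < N" "\<sigma> a0 = 0" unfolding a0_def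
    using permutes_in_image[OF permutes_inv[OF s]] N0 permutes_inverses[OF s] by auto
  have j0: "j0 < N" "\<tau> j0 = 0" unfolding j0_def
    using permutes_in_image[OF permutes_inv[OF t]] N0 permutes_inverses[OF t] by auto
  have sin: "\<And>a. a < N \<Longrightarrow> \<sigma> a < N" using permutes_in_image[OF s] by simp
  have tin: "\<And>a. a < N \<Longrightarrow> \<tau> a < N" using permutes_in_image[OF t] by simp
  let ?F = "fourier Ns" and ?G = "fourier Ms"
  have e1: "e j = d a0 * ?F $$ (a0, j)" if "j < N" for j
    using h a0 that G0(1)[OF tin[OF that]] by force
  have e2: "e j0 = d a * ?F $$ (a, j0)" if "a < N" for a
    using h j0 that G0(2)[OF sin[OF that]] by force
  have key: "?G $$ (\<sigma> a, \<tau> j) * ?F $$ (a0, j) * ?F $$ (a, j0) = ?F $$ (a0, j0) * ?F $$ (a, j)"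
    if a: "a < N" and j: "j < N" for a j
  proof -
    have "d a0 * (?G $$ (\<sigma> a, \<tau> j) * ?F $$ (a0, j) * ?F $$ (a, j0)) = (?G $$ (\<sigma> a, \<tau> j) * e j) * ?F $$ (a, j0)"
      using e1[OF j] by (simp add: ac_simps)
    also have "\<dots> = (d a * ?F $$ (a, j0)) * ?F $$ (a, j)" using h a j by (simp add: ac_simps)
    also have "\<dots> = e j0 * ?F $$ (a, j)" using e2[OF a] by simp
    also have "\<dots> = d a0 * (?F $$ (a0, j0) * ?F $$ (a, j))" using e1[OF j0(1)] by (simp add: ac_simps)
    finally show ?thesis using d a0(1) by simp
  qed
  fix a j assume a: "a < N" and j: "j < N"
  define \<alpha> where "\<alpha> = to_idx Ns a0"
  define \<beta> where "\<beta> = to_idx Ns j0"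
  define x where "x = to_idx Ns a"
  define y where "y = to_idx Ns j"
  define a' where "a' = tr Ns \<alpha> a"
  define j' where "j' = tr Ns \<beta> j"
  have a': "a' < N" "to_idx Ns a' = idx_add Ns x \<alpha>" unfolding a'_def x_def using tr_N a by auto
  have j': "j' < N" "to_idx Ns j' = idx_add Ns y \<beta>" unfolding j'_def y_def using tr_N j by auto
  define A where "A = chi Ns \<alpha> y"
  define B where "B = chi Ns x \<beta>"
  define C where "C = chi Ns \<alpha> \<beta>"
  define D where "D = chi Ns x y"
  have 1: "?F $$ (a0, j') = A * C" using F_idx[OF a0(1) j'(1)] j'(2) unfolding A_def C_def \<alpha>_def
    by (simp add: chi_add2[OF apN])
  have 2: "?F $$ (a', j0) = B * C" using F_idx[OF a'(1) j0(1)] a'(2) unfolding B_def C_def \<beta>_def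
    by (simp add: chi_add1[OF apN])
  have 3: "?F $$ (a', j') = (D * B) * (A * C)" using F_idx[OF a'(1) j'(1)] a'(2) j'(2)
    unfolding A_def B_def C_def D_def by (simp add: chi_add1[OF apN] chi_add2[OF apN])
  have 4: "?F $$ (a0, j0) = C" using F_idx[OF a0(1) j0(1)] unfolding C_def \<alpha>_def \<beta>_def by simp
  have "?G $$ (\<sigma> a', \<tau> j') * (A * C) * (B * C) = C * ((D * B) * (A * C))"
    using key[OF a'(1) j'(1)] 1 2 3 4 by simp
  then have "?G $$ (\<sigma> a', \<tau> j') * (A * B * C * C) = D * (A * B * C * C)" by (simp add: ac_simps)
  moreover have "A * B * C * C \<noteq> 0" unfolding A_def B_def C_def by (simp add: chi_nz)
  ultimately have "?G $$ (\<sigma> a', \<tau> j') = D" by simp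
  then show "?G $$ (\<sigma> (tr Ns (to_idx Ns (inv_into UNIV \<sigma> 0)) a), \<tau> (tr Ns (to_idx Ns (inv_into UNIV \<tau> 0)) j)) = ?F $$ (a, j)"
    unfolding a'_def j'_def \<alpha>_def \<beta>_def a0_def j0_def D_def x_def y_def using F_idx[OF a j] by simp
qed


lemma bijN: "bij_betw (to_idx Ns) {..<N} (idx_set Ns)" using to_idx_bij[OF apN] N1 by simp
lemma bijM: "bij_betw (to_idx Ms) {..<N} (idx_set Ms)" using to_idx_bij[OF apM] N2 by simp

lemma invN: "x \<in> idx_set Ns \<Longrightarrow> inv_into {..<N} (to_idx Ns) x < N \<and> to_idx Ns (inv_into {..<N} (to_idx Ns) x) = x"
  using bijN by (meson bij_betw_apply bij_betw_inv_into bij_betw_inv_into_right lessThan_iff)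
lemma invM: "x \<in> idx_set Ms \<Longrightarrow> inv_into {..<N} (to_idx Ms) x < N \<and> to_idx Ms (inv_into {..<N} (to_idx Ms) x) = x"
  using bijM by (meson bij_betw_apply bij_betw_inv_into bij_betw_inv_into_right lessThan_iff)
lemma inN: "a < N \<Longrightarrow> to_idx Ns a \<in> idx_set Ns" using bijN bij_betw_apply by fastforce
lemma inM: "a < N \<Longrightarrow> to_idx Ms a \<in> idx_set Ms" using bijM bij_betw_apply by fastforce
lemma invN2: "a < N \<Longrightarrow> inv_into {..<N} (to_idx Ns) (to_idx Ns a) = a"
  using bijN by (simp add: bij_betw_inv_into_left)
lemma invM2: "a < N \<Longrightarrow> inv_into {..<N} (to_idx Ms) (to_idx Ms a) = a"
  using bijM by (simp add: bij_betw_inv_into_left)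

lemma claimB:
  assumes s: "\<sigma> permutes {..<N}" and t: "\<tau> permutes {..<N}"
    and h: "\<forall>a<N. \<forall>j<N. fourier Ms $$ (\<sigma> a, \<tau> j) = fourier Ns $$ (a, j)"
  defines "\<phi> \<equiv> \<lambda>x. to_idx Ms (\<sigma> (inv_into {..<N} (to_idx Ns) x))"
  shows "\<phi> \<in> iso (idx_group Ns) (idx_group Ms)"
    and "\<forall>x\<in>idx_set Ns. \<forall>y\<in>idx_set Ns. \<phi> (idx_add Ns x y) = idx_add Ms (\<phi> x) (\<phi> y)"
proof -
  have sin: "\<And>a. a < N \<Longrightarrow> \<sigma> a < N" using permutes_in_image[OF s] by simp
  have tin: "\<And>a. a < N \<Longrightarrow> \<tau> a < N" using permutes_in_image[OF t] by simp
  have bij: "bij_betw \<phi> (idx_set Ns) (idx_set Ms)"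
  proof -
    have "bij_betw (to_idx Ms \<circ> \<sigma> \<circ> inv_into {..<N} (to_idx Ns)) (idx_set Ns) (idx_set Ms)"
      by (rule bij_betw_trans[OF bij_betw_inv_into[OF bijN] bij_betw_trans[OF permutes_imp_bij[OF s] bijM]])
    then show ?thesis unfolding \<phi>_def by (simp add: comp_def)
  qed
  have phin: "\<phi> u \<in> idx_set Ms" if "u \<in> idx_set Ns" for u by (rule bij_betw_apply[OF bij that])
  have L: "chi Ms (\<phi> u) (to_idx Ms (\<tau> j)) = chi Ns u (to_idx Ns j)" if u: "u \<in> idx_set Ns" and j: "j < N" for u j
  proof -
    have i: "inv_into {..<N} (to_idx Ns) u < N" "to_idx Ns (inv_into {..<N} (to_idx Ns) u) = u" using invN[OF u] by auto
    have "chi Ms (\<phi> u) (to_idx Ms (\<tau> j)) = fourier Ms $$ (\<sigma> (inv_into {..<N} (to_idx Ns) u), \<tau> j)"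
      unfolding \<phi>_def using G_idx sin tin i j by simp
    also have "\<dots> = fourier Ns $$ (inv_into {..<N} (to_idx Ns) u, j)" using h i j by simp
    also have "\<dots> = chi Ns u (to_idx Ns j)" using F_idx i j by simp
    finally show ?thesis .
  qed
  have hom: "\<phi> (idx_add Ns x y) = idx_add Ms (\<phi> x) (\<phi> y)" if x: "x \<in> idx_set Ns" and y: "y \<in> idx_set Ns" for x y
  proof (rule chi_nondeg[OF apM phin[OF idx_add_in[OF apN]] idx_add_in[OF apM]], rule ballI)
    fix z assume z: "z \<in> idx_set Ms"
    define j where "j = inv_into UNIV \<tau> (inv_into {..<N} (to_idx Ms) z)"
    have j: "j < N" "to_idx Ms (\<tau> j) = z" unfolding j_def
      using invM[OF z] permutes_in_image[OF permutes_inv[OF t]] permutes_inverses[OF t] by auto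
    have "chi Ms z (\<phi> (idx_add Ns x y)) = chi Ms (\<phi> (idx_add Ns x y)) (to_idx Ms (\<tau> j))"
      using j chi_sym by metis
    also have "\<dots> = chi Ns (idx_add Ns x y) (to_idx Ns j)" using L[OF idx_add_in[OF apN] j(1)] .
    also have "\<dots> = chi Ns x (to_idx Ns j) * chi Ns y (to_idx Ns j)" by (rule chi_add1[OF apN])
    also have "\<dots> = chi Ms (\<phi> x) z * chi Ms (\<phi> y) z" using L[OF x j(1)] L[OF y j(1)] j(2) by simp
    also have "\<dots> = chi Ms z (idx_add Ms (\<phi> x) (\<phi> y))" using chi_add1[OF apM] chi_sym by metis
    finally show "chi Ms z (\<phi> (idx_add Ns x y)) = chi Ms z (idx_add Ms (\<phi> x) (\<phi> y))" .
  qed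
  show "\<forall>x\<in>idx_set Ns. \<forall>y\<in>idx_set Ns. \<phi> (idx_add Ns x y) = idx_add Ms (\<phi> x) (\<phi> y)" using hom by simp
  show "\<phi> \<in> iso (idx_group Ns) (idx_group Ms)"
    unfolding iso_def hom_def idx_group_def using bij hom phin by auto
qed

lemma claimC:
  assumes "h \<in> iso (idx_group Ns) (idx_group Ms)"
  shows "\<exists>\<sigma> \<tau>. \<sigma> permutes {..<N} \<and> \<tau> permutes {..<N} \<and>
           (\<forall>a<N. \<forall>j<N. fourier Ms $$ (\<sigma> a, \<tau> j) = fourier Ns $$ (a, j))"
proof -
  have hb: "bij_betw h (idx_set Ns) (idx_set Ms)" and
    hh: "\<forall>x\<in>idx_set Ns. \<forall>y\<in>idx_set Ns. h (idx_add Ns x y) = idx_add Ms (h x) (h y)"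
    using assms unfolding iso_def hom_def idx_group_def by auto
  define hi where "hi = inv_into (idx_set Ns) h"
  have hi1: "z \<in> idx_set Ms \<Longrightarrow> hi z \<in> idx_set Ns \<and> h (hi z) = z" for z
    unfolding hi_def using hb by (meson bij_betw_apply bij_betw_inv_into bij_betw_inv_into_right)
  have hi2: "x \<in> idx_set Ns \<Longrightarrow> hi (h x) = x" for x
    unfolding hi_def using hb by (simp add: bij_betw_inv_into_left)
  have hin: "x \<in> idx_set Ns \<Longrightarrow> h x \<in> idx_set Ms" for x by (rule bij_betw_apply[OF hb])
  have hihom: "hi (idx_add Ms z z') = idx_add Ns (hi z) (hi z')" if z: "z \<in> idx_set Ms" and z': "z' \<in> idx_set Ms" for z z'
  proof -
    have "h (idx_add Ns (hi z) (hi z')) = idx_add Ms z z'" using hh hi1[OF z] hi1[OF z'] by simp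
    then show ?thesis using hi2[OF idx_add_in[OF apN]] by metis
  qed
  have "\<exists>w. y \<in> idx_set Ns \<longrightarrow> w \<in> idx_set Ms \<and> (\<forall>z\<in>idx_set Ms. chi Ns (hi z) y = chi Ms z w)" for y
  proof (cases "y \<in> idx_set Ns")
    case True
    have "\<exists>w\<in>idx_set Ms. \<forall>z\<in>idx_set Ms. chi Ns (hi z) y = chi Ms z w"
    proof (rule char_rep[OF apM])
      show "\<forall>z\<in>idx_set Ms. \<forall>z'\<in>idx_set Ms. chi Ns (hi (idx_add Ms z z')) y = chi Ns (hi z) y * chi Ns (hi z') y"
        using hihom chi_add1[OF apN] by simp
      show "\<forall>z\<in>idx_set Ms. chi Ns (hi z) y \<noteq> 0" by (simp add: chi_nz)
    qed
    then show ?thesis by blast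
  qed simp
  then obtain \<psi> where psi: "\<And>y. y \<in> idx_set Ns \<Longrightarrow> \<psi> y \<in> idx_set Ms \<and> (\<forall>z\<in>idx_set Ms. chi Ns (hi z) y = chi Ms z (\<psi> y))"
    by metis
  have psi_inj: "inj_on \<psi> (idx_set Ns)"
  proof (rule inj_onI)
    fix y y' assume y: "y \<in> idx_set Ns" and y': "y' \<in> idx_set Ns" and e: "\<psi> y = \<psi> y'"
    show "y = y'"
    proof (rule chi_nondeg[OF apN y y'], rule ballI)
      fix x assume x: "x \<in> idx_set Ns"
      have "chi Ns x y = chi Ns (hi (h x)) y" using hi2[OF x] by simp
      also have "\<dots> = chi Ms (h x) (\<psi> y)" using psi[OF y] hin[OF x] by blast
      also have "\<dots> = chi Ns (hi (h x)) y'" using psi[OF y'] hin[OF x] e by simp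
      also have "\<dots> = chi Ns x y'" using hi2[OF x] by simp
      finally show "chi Ns x y = chi Ns x y'" .
    qed
  qed
  have finM: "finite (idx_set Ms)" using bijM bij_betw_finite by blast
  have cards: "card (idx_set Ns) = card (idx_set Ms)"
    using bij_betw_same_card[OF bijN] bij_betw_same_card[OF bijM] by simp
  have psi_bij: "bij_betw \<psi> (idx_set Ns) (idx_set Ms)"
    unfolding bij_betw_def
  proof
    show "inj_on \<psi> (idx_set Ns)" by (rule psi_inj)
    have sub: "\<psi> ` idx_set Ns \<subseteq> idx_set Ms" using psi by blast
    have "card (\<psi> ` idx_set Ns) = card (idx_set Ms)" using card_image[OF psi_inj] cards by simp
    then show "\<psi> ` idx_set Ns = idx_set Ms" using card_subset_eq[OF finM sub] by simp
  qed
  define \<sigma>0 where "\<sigma>0 = inv_into {..<N} (to_idx Ms) \<circ> h \<circ> to_idx Ns"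
  define \<tau>0 where "\<tau>0 = inv_into {..<N} (to_idx Ms) \<circ> \<psi> \<circ> to_idx Ns"
  have b1: "bij_betw \<sigma>0 {..<N} {..<N}" unfolding \<sigma>0_def
    by (rule bij_betw_trans[OF bijN bij_betw_trans[OF hb bij_betw_inv_into[OF bijM]]])
  have b2: "bij_betw \<tau>0 {..<N} {..<N}" unfolding \<tau>0_def
    by (rule bij_betw_trans[OF bijN bij_betw_trans[OF psi_bij bij_betw_inv_into[OF bijM]]])
  define \<sigma> where "\<sigma> = (\<lambda>a. if a < N then \<sigma>0 a else a)"
  define \<tau> where "\<tau> = (\<lambda>a. if a < N then \<tau>0 a else a)"
  have "\<forall>a<N. \<forall>j<N. fourier Ms $$ (\<sigma> a, \<tau> j) = fourier Ns $$ (a, j)"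
  proof (intro allI impI)
    fix a j assume a: "a < N" and j: "j < N"
    have sa: "\<sigma> a < N" "to_idx Ms (\<sigma> a) = h (to_idx Ns a)"
      unfolding \<sigma>_def \<sigma>0_def using a invM[OF hin[OF inN[OF a]]] by auto
    have tj: "\<tau> j < N" "to_idx Ms (\<tau> j) = \<psi> (to_idx Ns j)"
      unfolding \<tau>_def \<tau>0_def using j invM psi inN[OF j] by auto
    have "fourier Ms $$ (\<sigma> a, \<tau> j) = chi Ms (h (to_idx Ns a)) (\<psi> (to_idx Ns j))"
      using G_idx sa tj by simp
    also have "\<dots> = chi Ns (hi (h (to_idx Ns a))) (to_idx Ns j)"
      using psi[OF inN[OF j]] hin[OF inN[OF a]] by simp
    also have "\<dots> = fourier Ns $$ (a, j)" using hi2[OF inN[OF a]] F_idx[OF a j] by simp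
    finally show "fourier Ms $$ (\<sigma> a, \<tau> j) = fourier Ns $$ (a, j)" .
  qed
  moreover have "\<sigma> permutes {..<N}" unfolding \<sigma>_def by (rule perm_of_bij[OF b1])
  moreover have "\<tau> permutes {..<N}" unfolding \<tau>_def by (rule perm_of_bij[OF b2])
  ultimately show ?thesis by blast
qed


lemma F_sym: "a < N \<Longrightarrow> j < N \<Longrightarrow> fourier Ns $$ (a, j) = fourier Ns $$ (j, a)"
  using F_idx chi_sym by simp
lemma G_sym: "a < N \<Longrightarrow> j < N \<Longrightarrow> fourier Ms $$ (a, j) = fourier Ms $$ (j, a)"
  using G_idx chi_sym by simp

lemma trM: "a < N \<Longrightarrow> to_idx Ms (tr Ms k a) = idx_add Ms (to_idx Ms a) k" "a < N \<Longrightarrow> tr Ms k a < N"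
  using tr_idx[OF apM] N2 by auto

lemma trN_perm: "tr Ns k permutes {..<N}" using tr_permutes[OF apN] N1 by simp
lemma trM_perm: "tr Ms k permutes {..<N}" using tr_permutes[OF apM] N2 by simp

lemma decomp:
  assumes s: "\<sigma> permutes {..<N}" and t: "\<tau> permutes {..<N}" and d: "\<forall>i<N. d i \<noteq> 0"
    and h: "\<forall>a<N. \<forall>j<N. fourier Ms $$ (\<sigma> a, \<tau> j) * e j = d a * fourier Ns $$ (a, j)"
  shows "\<exists>\<alpha> \<beta>. \<alpha> \<in> idx_set Ns \<and> \<beta> \<in> idx_set Ns \<and>
     (\<forall>a<N. \<forall>j<N. fourier Ms $$ ((\<sigma> \<circ> tr Ns \<alpha>) a, (\<tau> \<circ> tr Ns \<beta>) j) = fourier Ns $$ (a, j))"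
proof -
  have "inv_into UNIV \<sigma> 0 < N" "inv_into UNIV \<tau> 0 < N"
    using permutes_in_image[OF permutes_inv[OF s]] permutes_in_image[OF permutes_inv[OF t]] N0 by auto
  then show ?thesis using claimA[OF s t d h] inN by (intro exI conjI) auto
qed

lemma shiftrel:
  assumes s': "\<sigma>' permutes {..<N}" and t': "\<tau>' permutes {..<N}"
    and h: "\<forall>a<N. \<forall>j<N. fourier Ms $$ (\<sigma>' a, \<tau>' j) = fourier Ns $$ (a, j)"
    and \<alpha>: "\<alpha> \<in> idx_set Ns" and s: "\<sigma> permutes {..<N}" and rel: "\<forall>j<N. \<sigma>' j = \<sigma> (tr Ns \<alpha> j)"
  shows "\<exists>\<gamma>\<in>idx_set Ms. \<forall>j<N. tr Ms \<gamma> (\<sigma> j) = \<sigma>' j"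
proof -
  define \<phi> where "\<phi> = (\<lambda>x. to_idx Ms (\<sigma>' (inv_into {..<N} (to_idx Ns) x)))"
  have iso: "\<phi> \<in> iso (idx_group Ns) (idx_group Ms)"
    and hom: "\<forall>x\<in>idx_set Ns. \<forall>y\<in>idx_set Ns. \<phi> (idx_add Ns x y) = idx_add Ms (\<phi> x) (\<phi> y)"
    using claimB[OF s' t' h] unfolding \<phi>_def by auto
  have phin: "\<phi> x \<in> idx_set Ms" if "x \<in> idx_set Ns" for x
    using iso that unfolding iso_def idx_group_def bij_betw_def by auto
  define \<gamma> where "\<gamma> = \<phi> \<alpha>"
  have "tr Ms \<gamma> (\<sigma> j) = \<sigma>' j" if j: "j < N" for j
  proof -
    define u where "u = inv_into UNIV (tr Ns \<alpha>) j"
    have u: "u < N" "tr Ns \<alpha> u = j" unfolding u_def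
      using permutes_in_image[OF permutes_inv[OF trN_perm]] permutes_inverses[OF trN_perm] j by auto
    have sj: "\<sigma> j = \<sigma>' u" using rel u by simp
    have sjN: "\<sigma> j < N" using permutes_in_image[OF s] j by simp
    have s'jN: "\<sigma>' j < N" using permutes_in_image[OF s'] j by simp
    have "to_idx Ms (tr Ms \<gamma> (\<sigma> j)) = idx_add Ms (to_idx Ms (\<sigma> j)) \<gamma>" using trM sjN by simp
    also have "to_idx Ms (\<sigma> j) = \<phi> (to_idx Ns u)" unfolding \<phi>_def sj using invN2 u by simp
    also have "idx_add Ms (\<phi> (to_idx Ns u)) \<gamma> = \<phi> (idx_add Ns (to_idx Ns u) \<alpha>)"
      unfolding \<gamma>_def using hom inN[OF u(1)] \<alpha> by simp
    also have "idx_add Ns (to_idx Ns u) \<alpha> = to_idx Ns j" using tr_N(1)[OF u(1), of \<alpha>] u(2) by simp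
    also have "\<phi> (to_idx Ns j) = to_idx Ms (\<sigma>' j)" unfolding \<phi>_def using invN2 j by simp
    finally have "to_idx Ms (tr Ms \<gamma> (\<sigma> j)) = to_idx Ms (\<sigma>' j)" .
    then show ?thesis by (rule inj_onD[OF bij_betw_imp_inj_on[OF bijM]]) (use trM(2)[OF sjN] s'jN in auto)
  qed
  moreover have "\<gamma> \<in> idx_set Ms" unfolding \<gamma>_def by (rule phin[OF \<alpha>])
  ultimately show ?thesis by (intro bexI[of _ \<gamma>]) auto
qed



lemma one_nz: "\<forall>j<N. (1::complex) \<noteq> 0" by simp

lemma perm_lt: "\<sigma> permutes {..<N} \<Longrightarrow> j < N \<Longrightarrow> \<sigma> j < N"
  using permutes_in_image by fastforce

lemma inv_perm_lt: "\<sigma> permutes {..<N} \<Longrightarrow> j < N \<Longrightarrow> inv_into UNIV \<sigma> j < N"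
  using permutes_in_image[OF permutes_inv] by fastforce

lemma decomp_b:
  assumes "(S, T) \<in> Map_P N (fourier Ns) (fourier Ms)"
  shows "(S, T) \<in> pair_set_prod (Map_S N (fourier Ns) (fourier Ms)) (Stab_Z Ns)"
    and "(S, T) \<in> pair_set_prod (Stab_Z Ms) (Map_S N (fourier Ns) (fourier Ms))"
proof -
  let ?F = "fourier Ns" and ?G = "fourier Ms"
  have S: "S \<in> enphased_perm_mats N" and T: "T \<in> enphased_perm_mats N" and act: "pair_act S T ?F = ?G"
    using assms unfolding Map_P_def by auto
  obtain \<sigma> d where s: "\<sigma> permutes {..<N}" and du: "\<forall>i<N. cmod (d i) = 1" and Sd: "S = mono_mat N \<sigma> d"
    using S enph_iff by blast
  obtain \<tau> e where t: "\<tau> permutes {..<N}" and eu: "\<forall>i<N. cmod (e i) = 1" and Te: "T = mono_mat N \<tau> e"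
    using T enph_iff by blast
  have dn: "\<forall>i<N. d i \<noteq> 0" and en: "\<forall>i<N. e i \<noteq> 0" using du eu unit_nz by auto
  have cond: "\<forall>a<N. \<forall>j<N. ?G $$ (\<sigma> a, \<tau> j) * e j = d a * ?F $$ (a, j)"
    using crit[OF s t en F_car G_car] act Sd Te by simp
  obtain \<alpha> \<beta> where \<alpha>: "\<alpha> \<in> idx_set Ns" and \<beta>: "\<beta> \<in> idx_set Ns"
    and hh0: "\<forall>a<N. \<forall>j<N. ?G $$ ((\<sigma> \<circ> tr Ns \<alpha>) a, (\<tau> \<circ> tr Ns \<beta>) j) = ?F $$ (a, j)"
    using decomp[OF s t dn cond] by blast
  define \<sigma>' where "\<sigma>' = \<sigma> \<circ> tr Ns \<alpha>"
  define \<tau>' where "\<tau>' = \<tau> \<circ> tr Ns \<beta>"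
  have hh: "\<forall>a<N. \<forall>j<N. ?G $$ (\<sigma>' a, \<tau>' j) = ?F $$ (a, j)" using hh0 unfolding \<sigma>'_def \<tau>'_def .
  have s': "\<sigma>' permutes {..<N}" unfolding \<sigma>'_def by (rule permutes_compose[OF trN_perm s])
  have t': "\<tau>' permutes {..<N}" unfolding \<tau>'_def by (rule permutes_compose[OF trN_perm t])
  define P where "P = mono_mat N \<sigma>' (\<lambda>_. 1)"
  define R where "R = mono_mat N \<tau>' (\<lambda>_. 1)"
  have PR: "pair_act P R ?F = ?G" unfolding P_def R_def using crit[OF s' t' one_nz F_car G_car] hh by simp
  have PRS: "(P, R) \<in> Map_S N ?F ?G" unfolding Map_S_def using PR perm_iff s' t' P_def R_def by blast
  have invP: "invn N P" unfolding P_def by (rule invn_mono[OF s' one_nz])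
  have invR: "invn N R" unfolding R_def by (rule invn_mono[OF t' one_nz])
  define \<rho>a where "\<rho>a = inv_into UNIV (tr Ns \<alpha>)"
  define \<rho>b where "\<rho>b = inv_into UNIV (tr Ns \<beta>)"
  have \<rho>a: "\<rho>a permutes {..<N}" unfolding \<rho>a_def by (rule permutes_inv[OF trN_perm])
  have \<rho>b: "\<rho>b permutes {..<N}" unfolding \<rho>b_def by (rule permutes_inv[OF trN_perm])
  define S2 where "S2 = mono_mat N \<rho>a (\<lambda>j. d (tr Ns \<alpha> (\<rho>a j)))"
  define T2 where "T2 = mono_mat N \<rho>b (\<lambda>j. e (tr Ns \<beta> (\<rho>b j)))"
  have S2DZ: "S2 \<in> DZ_mats Ns"
    using DZ_form[OF apN, of "\<lambda>i. d (tr Ns \<alpha> i)" \<alpha>] N1 du tr_N(2) \<alpha> unfolding S2_def \<rho>a_def by simp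
  have T2DZ: "T2 \<in> DZ_mats Ns"
    using DZ_form[OF apN, of "\<lambda>i. e (tr Ns \<beta> i)" \<beta>] N1 eu tr_N(2) \<beta> unfolding T2_def \<rho>b_def by simp
  have S2eq: "S2 = mono_mat N \<rho>a d" unfolding S2_def \<rho>a_def using permutes_inverses(1)[OF trN_perm] by simp
  have T2eq: "T2 = mono_mat N \<rho>b e" unfolding T2_def \<rho>b_def using permutes_inverses(1)[OF trN_perm] by simp
  have invS2: "invn N S2" unfolding S2eq by (rule invn_mono[OF \<rho>a dn])
  have invT2: "invn N T2" unfolding T2eq by (rule invn_mono[OF \<rho>b en])
  have SPS2: "S = P * S2"
  proof -
    have "P * S2 = mono_mat N (\<sigma>' \<circ> \<rho>a) (\<lambda>j. 1 * d j)"
      unfolding P_def S2eq by (rule mono_mult) (use inv_perm_lt[OF trN_perm] \<rho>a_def in simp)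
    also have "\<dots> = mono_mat N \<sigma> d"
      by (rule mono_cong) (auto simp: \<sigma>'_def \<rho>a_def permutes_inverses(1)[OF trN_perm])
    finally show ?thesis using Sd by simp
  qed
  have TRT2: "T = R * T2"
  proof -
    have "R * T2 = mono_mat N (\<tau>' \<circ> \<rho>b) (\<lambda>j. 1 * e j)"
      unfolding R_def T2eq by (rule mono_mult) (use inv_perm_lt[OF trN_perm] \<rho>b_def in simp)
    also have "\<dots> = mono_mat N \<tau> e"
      by (rule mono_cong) (auto simp: \<tau>'_def \<rho>b_def permutes_inverses(1)[OF trN_perm])
    finally show ?thesis using Te by simp
  qed
  have Pc: "P \<in> carrier_mat N N" unfolding P_def by simp
  have Rc: "R \<in> carrier_mat N N" unfolding R_def by simp
  have S2c: "S2 \<in> carrier_mat N N" unfolding S2_def by simp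
  have stab1: "pair_act S2 T2 ?F = ?F"
  proof (rule pa_cancel[OF invP invR pa_carrier[OF S2c F_car invT2] F_car])
    have "pair_act P R (pair_act S2 T2 ?F) = pair_act (P * S2) (R * T2) ?F"
      by (rule pa_comp[OF Pc S2c invR invT2 F_car, symmetric])
    also have "\<dots> = ?G" using act SPS2 TRT2 by simp
    finally show "pair_act P R (pair_act S2 T2 ?F) = pair_act P R ?F" using PR by simp
  qed
  have "(S2, T2) \<in> Stab_Z Ns" unfolding Stab_Z_def using S2DZ T2DZ stab1 by blast
  then show "(S, T) \<in> pair_set_prod (Map_S N ?F ?G) (Stab_Z Ns)"
    unfolding pair_set_prod_iff using PRS SPS2 TRT2 by blast
  obtain \<gamma> where \<gamma>: "\<gamma> \<in> idx_set Ms" and g: "\<forall>j<N. tr Ms \<gamma> (\<sigma> j) = \<sigma>' j"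
    using shiftrel[OF s' t' hh \<alpha> s] unfolding \<sigma>'_def by auto
  have hh': "\<forall>a<N. \<forall>j<N. ?G $$ (\<tau>' a, \<sigma>' j) = ?F $$ (a, j)"
    using hh G_sym F_sym perm_lt[OF s'] perm_lt[OF t'] by simp
  obtain \<delta> where \<delta>: "\<delta> \<in> idx_set Ms" and dd: "\<forall>j<N. tr Ms \<delta> (\<tau> j) = \<tau>' j"
    using shiftrel[OF t' s' hh' \<beta> t] unfolding \<tau>'_def by auto
  define \<rho>g where "\<rho>g = inv_into UNIV (tr Ms \<gamma>)"
  define \<rho>d where "\<rho>d = inv_into UNIV (tr Ms \<delta>)"
  have \<rho>g: "\<rho>g permutes {..<N}" unfolding \<rho>g_def by (rule permutes_inv[OF trM_perm])
  have \<rho>d: "\<rho>d permutes {..<N}" unfolding \<rho>d_def by (rule permutes_inv[OF trM_perm])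
  define S1 where "S1 = mono_mat N \<rho>g (\<lambda>j. d (inv_into UNIV \<sigma> (\<rho>g j)))"
  define T1 where "T1 = mono_mat N \<rho>d (\<lambda>j. e (inv_into UNIV \<tau> (\<rho>d j)))"
  have S1DZ: "S1 \<in> DZ_mats Ms"
    using DZ_form[OF apM, of "\<lambda>i. d (inv_into UNIV \<sigma> i)" \<gamma>] N2 du inv_perm_lt[OF s] \<gamma> unfolding S1_def \<rho>g_def by simp
  have T1DZ: "T1 \<in> DZ_mats Ms"
    using DZ_form[OF apM, of "\<lambda>i. e (inv_into UNIV \<tau> i)" \<delta>] N2 eu inv_perm_lt[OF t] \<delta> unfolding T1_def \<rho>d_def by simp
  have invT1: "invn N T1" unfolding T1_def
    by (rule invn_mono[OF \<rho>d]) (use en inv_perm_lt[OF t] perm_lt[OF \<rho>d] in auto)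
  have S1c: "S1 \<in> carrier_mat N N" unfolding S1_def by simp
  have SS1P: "S = S1 * P"
  proof -
    have "S1 * P = mono_mat N (\<rho>g \<circ> \<sigma>') (\<lambda>j. d (inv_into UNIV \<sigma> (\<rho>g (\<sigma>' j))) * 1)"
      unfolding P_def S1_def by (rule mono_mult) (use perm_lt[OF s'] in simp)
    also have "\<dots> = mono_mat N \<sigma> d"
    proof (rule mono_cong)
      fix j assume j: "j < N"
      have "\<rho>g (\<sigma>' j) = \<sigma> j" using g j unfolding \<rho>g_def by (metis permutes_inverses(2)[OF trM_perm])
      then show "(\<rho>g \<circ> \<sigma>') j = \<sigma> j" "d (inv_into UNIV \<sigma> (\<rho>g (\<sigma>' j))) * 1 = d j"
        using permutes_inverses(2)[OF s] by auto
    qed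
    finally show ?thesis using Sd by simp
  qed
  have TT1R: "T = T1 * R"
  proof -
    have "T1 * R = mono_mat N (\<rho>d \<circ> \<tau>') (\<lambda>j. e (inv_into UNIV \<tau> (\<rho>d (\<tau>' j))) * 1)"
      unfolding R_def T1_def by (rule mono_mult) (use perm_lt[OF t'] in simp)
    also have "\<dots> = mono_mat N \<tau> e"
    proof (rule mono_cong)
      fix j assume j: "j < N"
      have "\<rho>d (\<tau>' j) = \<tau> j" using dd j unfolding \<rho>d_def by (metis permutes_inverses(2)[OF trM_perm])
      then show "(\<rho>d \<circ> \<tau>') j = \<tau> j" "e (inv_into UNIV \<tau> (\<rho>d (\<tau>' j))) * 1 = e j"
        using permutes_inverses(2)[OF t] by auto
    qed
    finally show ?thesis using Te by simp
  qed
  have stab2: "pair_act S1 T1 ?G = ?G"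
  proof -
    have "?G = pair_act (S1 * P) (T1 * R) ?F" using act SS1P TT1R by simp
    also have "\<dots> = pair_act S1 T1 (pair_act P R ?F)" by (rule pa_comp[OF S1c Pc invT1 invR F_car])
    finally show ?thesis using PR by simp
  qed
  have "(S1, T1) \<in> Stab_Z Ms" unfolding Stab_Z_def using S1DZ T1DZ stab2 by blast
  then show "(S, T) \<in> pair_set_prod (Stab_Z Ms) (Map_S N ?F ?G)"
    unfolding pair_set_prod_iff using PRS SS1P TT1R by blast
qed

lemma comp_b1:
  assumes "(S, T) \<in> pair_set_prod (Map_S N (fourier Ns) (fourier Ms)) (Stab_Z Ns)"
  shows "(S, T) \<in> Map_P N (fourier Ns) (fourier Ms)"
proof -
  let ?F = "fourier Ns" and ?G = "fourier Ms"
  obtain P R S2 T2 where e: "S = P * S2" "T = R * T2" and PR: "(P, R) \<in> Map_S N ?F ?G"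
    and ST2: "(S2, T2) \<in> Stab_Z Ns"
    using assms unfolding pair_set_prod_iff by blast
  obtain \<sigma> \<tau> where s: "\<sigma> permutes {..<N}" "P = mono_mat N \<sigma> (\<lambda>_. 1)"
    and t: "\<tau> permutes {..<N}" "R = mono_mat N \<tau> (\<lambda>_. 1)" and act: "pair_act P R ?F = ?G"
    using PR unfolding Map_S_def perm_iff by blast
  have S2: "S2 \<in> DZ_mats Ns" and T2: "T2 \<in> DZ_mats Ns" and act2: "pair_act S2 T2 ?F = ?F"
    using ST2 unfolding Stab_Z_def by auto
  obtain d k where d: "\<forall>i<N. cmod (d i) = 1" "k \<in> idx_set Ns"
    "S2 = mono_mat N (inv_into UNIV (tr Ns k)) (\<lambda>j. d (inv_into UNIV (tr Ns k) j))"
    using DZ_elim[OF apN S2] N1 by auto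
  obtain f l where f: "\<forall>i<N. cmod (f i) = 1" "l \<in> idx_set Ns"
    "T2 = mono_mat N (inv_into UNIV (tr Ns l)) (\<lambda>j. f (inv_into UNIV (tr Ns l) j))"
    using DZ_elim[OF apN T2] N1 by auto
  have pk: "inv_into UNIV (tr Ns k) permutes {..<N}" by (rule permutes_inv[OF trN_perm])
  have pl: "inv_into UNIV (tr Ns l) permutes {..<N}" by (rule permutes_inv[OF trN_perm])
  have invR: "invn N R" unfolding t(2) by (rule invn_mono[OF t(1) one_nz])
  have invT2: "invn N T2" unfolding f(3)
    by (rule invn_mono[OF pl]) (use f(1) inv_perm_lt[OF trN_perm] unit_nz in auto)
  have Sm: "S = mono_mat N (\<sigma> \<circ> inv_into UNIV (tr Ns k)) (\<lambda>j. 1 * d (inv_into UNIV (tr Ns k) j))"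
    unfolding e s(2) d(3) by (rule mono_mult) (use perm_lt[OF pk] in simp)
  have Tm: "T = mono_mat N (\<tau> \<circ> inv_into UNIV (tr Ns l)) (\<lambda>j. 1 * f (inv_into UNIV (tr Ns l) j))"
    unfolding e t(2) f(3) by (rule mono_mult) (use perm_lt[OF pl] in simp)
  have "S \<in> enphased_perm_mats N" unfolding Sm
    by (rule enphI[OF permutes_compose[OF pk s(1)]]) (use d(1) perm_lt[OF pk] in simp)
  moreover have "T \<in> enphased_perm_mats N" unfolding Tm
    by (rule enphI[OF permutes_compose[OF pl t(1)]]) (use f(1) perm_lt[OF pl] in simp)
  moreover have "pair_act S T ?F = ?G"
  proof -
    have "pair_act S T ?F = pair_act P R (pair_act S2 T2 ?F)" unfolding e
      by (rule pa_comp) (use s t d f invR invT2 F_car in simp_all)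
    then show ?thesis using act act2 by simp
  qed
  ultimately show ?thesis unfolding Map_P_def by blast
qed

lemma comp_b2:
  assumes "(S, T) \<in> pair_set_prod (Stab_Z Ms) (Map_S N (fourier Ns) (fourier Ms))"
  shows "(S, T) \<in> Map_P N (fourier Ns) (fourier Ms)"
proof -
  let ?F = "fourier Ns" and ?G = "fourier Ms"
  obtain P R S1 T1 where e: "S = S1 * P" "T = T1 * R" and PR: "(P, R) \<in> Map_S N ?F ?G"
    and ST1: "(S1, T1) \<in> Stab_Z Ms"
    using assms unfolding pair_set_prod_iff by blast
  obtain \<sigma> \<tau> where s: "\<sigma> permutes {..<N}" "P = mono_mat N \<sigma> (\<lambda>_. 1)"
    and t: "\<tau> permutes {..<N}" "R = mono_mat N \<tau> (\<lambda>_. 1)" and act: "pair_act P R ?F = ?G"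
    using PR unfolding Map_S_def perm_iff by blast
  have S1: "S1 \<in> DZ_mats Ms" and T1: "T1 \<in> DZ_mats Ms" and act1: "pair_act S1 T1 ?G = ?G"
    using ST1 unfolding Stab_Z_def by auto
  obtain d k where d: "\<forall>i<N. cmod (d i) = 1" "k \<in> idx_set Ms"
    "S1 = mono_mat N (inv_into UNIV (tr Ms k)) (\<lambda>j. d (inv_into UNIV (tr Ms k) j))"
    using DZ_elim[OF apM S1] N2 by auto
  obtain f l where f: "\<forall>i<N. cmod (f i) = 1" "l \<in> idx_set Ms"
    "T1 = mono_mat N (inv_into UNIV (tr Ms l)) (\<lambda>j. f (inv_into UNIV (tr Ms l) j))"
    using DZ_elim[OF apM T1] N2 by auto
  have pk: "inv_into UNIV (tr Ms k) permutes {..<N}" by (rule permutes_inv[OF trM_perm])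
  have pl: "inv_into UNIV (tr Ms l) permutes {..<N}" by (rule permutes_inv[OF trM_perm])
  have invR: "invn N R" unfolding t(2) by (rule invn_mono[OF t(1) one_nz])
  have invT1: "invn N T1" unfolding f(3)
    by (rule invn_mono[OF pl]) (use f(1) inv_perm_lt[OF trM_perm] unit_nz in auto)
  have Sm: "S = mono_mat N (inv_into UNIV (tr Ms k) \<circ> \<sigma>) (\<lambda>j. d (inv_into UNIV (tr Ms k) (\<sigma> j)) * 1)"
    unfolding e s(2) d(3) by (rule mono_mult) (use perm_lt[OF s(1)] in simp)
  have Tm: "T = mono_mat N (inv_into UNIV (tr Ms l) \<circ> \<tau>) (\<lambda>j. f (inv_into UNIV (tr Ms l) (\<tau> j)) * 1)"
    unfolding e t(2) f(3) by (rule mono_mult) (use perm_lt[OF t(1)] in simp)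
  have "S \<in> enphased_perm_mats N" unfolding Sm
    by (rule enphI[OF permutes_compose[OF s(1) pk]]) (use d(1) perm_lt[OF pk] perm_lt[OF s(1)] in simp)
  moreover have "T \<in> enphased_perm_mats N" unfolding Tm
    by (rule enphI[OF permutes_compose[OF t(1) pl]]) (use f(1) perm_lt[OF pl] perm_lt[OF t(1)] in simp)
  moreover have "pair_act S T ?F = ?G"
  proof -
    have "pair_act S T ?F = pair_act S1 T1 (pair_act P R ?F)" unfolding e
      by (rule pa_comp) (use s t d f invR invT1 F_car in simp_all)
    then show ?thesis using act act1 by simp
  qed
  ultimately show ?thesis unfolding Map_P_def by blast
qed

lemma partA1:
  "(\<exists>S\<in>enphased_perm_mats N. \<exists>T\<in>enphased_perm_mats N. fourier Ms = pair_act S T (fourier Ns))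
   \<longleftrightarrow> (\<exists>P\<in>perm_mats N. \<exists>R\<in>perm_mats N. fourier Ms = pair_act P R (fourier Ns))"
proof
  assume "\<exists>S\<in>enphased_perm_mats N. \<exists>T\<in>enphased_perm_mats N. fourier Ms = pair_act S T (fourier Ns)"
  then obtain S T where "(S, T) \<in> Map_P N (fourier Ns) (fourier Ms)" unfolding Map_P_def by auto
  then have "(S, T) \<in> pair_set_prod (Map_S N (fourier Ns) (fourier Ms)) (Stab_Z Ns)" by (rule decomp_b(1))
  then obtain P R where "(P, R) \<in> Map_S N (fourier Ns) (fourier Ms)" unfolding pair_set_prod_iff by blast
  then have "P \<in> perm_mats N" "R \<in> perm_mats N" "fourier Ms = pair_act P R (fourier Ns)"
    unfolding Map_S_def by auto
  then show "\<exists>P\<in>perm_mats N. \<exists>R\<in>perm_mats N. fourier Ms = pair_act P R (fourier Ns)"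
    by blast
next
  assume "\<exists>P\<in>perm_mats N. \<exists>R\<in>perm_mats N. fourier Ms = pair_act P R (fourier Ns)"
  then obtain P R where "P \<in> perm_mats N" "R \<in> perm_mats N" "fourier Ms = pair_act P R (fourier Ns)" by blast
  moreover have "X \<in> perm_mats N \<Longrightarrow> X \<in> enphased_perm_mats N" for X
    unfolding perm_iff using enphI by auto
  ultimately show "\<exists>S\<in>enphased_perm_mats N. \<exists>T\<in>enphased_perm_mats N. fourier Ms = pair_act S T (fourier Ns)"
    by blast
qed

lemma partA2:
  "(\<exists>P\<in>perm_mats N. \<exists>R\<in>perm_mats N. fourier Ms = pair_act P R (fourier Ns))
   \<longleftrightarrow> idx_group Ns \<cong> idx_group Ms"
proof
  assume "\<exists>P\<in>perm_mats N. \<exists>R\<in>perm_mats N. fourier Ms = pair_act P R (fourier Ns)"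
  then obtain P R where P: "P \<in> perm_mats N" and R: "R \<in> perm_mats N"
    and act0: "fourier Ms = pair_act P R (fourier Ns)" by blast
  obtain \<sigma> where s: "\<sigma> permutes {..<N}" and Ps: "P = mono_mat N \<sigma> (\<lambda>_. 1)" using P perm_iff by blast
  obtain \<tau> where t: "\<tau> permutes {..<N}" and Rt: "R = mono_mat N \<tau> (\<lambda>_. 1)" using R perm_iff by blast
  have act: "pair_act (mono_mat N \<sigma> (\<lambda>_. 1)) (mono_mat N \<tau> (\<lambda>_. 1)) (fourier Ns) = fourier Ms"
    using act0 Ps Rt by simp
  have "\<forall>a<N. \<forall>j<N. fourier Ms $$ (\<sigma> a, \<tau> j) = fourier Ns $$ (a, j)"
    using crit[OF s t one_nz F_car G_car] act by simp
  then show "idx_group Ns \<cong> idx_group Ms" using claimB(1)[OF s t] is_isoI by blast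
next
  assume "idx_group Ns \<cong> idx_group Ms"
  then obtain h where "h \<in> iso (idx_group Ns) (idx_group Ms)" unfolding is_iso_def by blast
  then obtain \<sigma> \<tau> where s: "\<sigma> permutes {..<N}" and t: "\<tau> permutes {..<N}"
    and h: "\<forall>a<N. \<forall>j<N. fourier Ms $$ (\<sigma> a, \<tau> j) = fourier Ns $$ (a, j)"
    using claimC by blast
  have "pair_act (mono_mat N \<sigma> (\<lambda>_. 1)) (mono_mat N \<tau> (\<lambda>_. 1)) (fourier Ns) = fourier Ms"
    using crit[OF s t one_nz F_car G_car] h by simp
  moreover have "mono_mat N \<sigma> (\<lambda>_. 1) \<in> perm_mats N" "mono_mat N \<tau> (\<lambda>_. 1) \<in> perm_mats N"
    unfolding perm_iff using s t by auto
  ultimately show "\<exists>P\<in>perm_mats N. \<exists>R\<in>perm_mats N. fourier Ms = pair_act P R (fourier Ns)"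
    by (metis)
qed

lemma partB:
  "Map_P N (fourier Ns) (fourier Ms) = pair_set_prod (Map_S N (fourier Ns) (fourier Ms)) (Stab_Z Ns)
   \<and> Map_P N (fourier Ns) (fourier Ms) = pair_set_prod (Stab_Z Ms) (Map_S N (fourier Ns) (fourier Ms))"
proof -
  have 1: "(S, T) \<in> Map_P N (fourier Ns) (fourier Ms) \<longleftrightarrow> (S, T) \<in> pair_set_prod (Map_S N (fourier Ns) (fourier Ms)) (Stab_Z Ns)" for S T
    using decomp_b(1) comp_b1 by blast
  have 2: "(S, T) \<in> Map_P N (fourier Ns) (fourier Ms) \<longleftrightarrow> (S, T) \<in> pair_set_prod (Stab_Z Ms) (Map_S N (fourier Ns) (fourier Ms))" for S T
    using decomp_b(2) comp_b2 by blast
  have "Map_P N (fourier Ns) (fourier Ms) = pair_set_prod (Map_S N (fourier Ns) (fourier Ms)) (Stab_Z Ns)"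
  proof (rule Set.set_eqI)
    fix x show "x \<in> Map_P N (fourier Ns) (fourier Ms) \<longleftrightarrow> x \<in> pair_set_prod (Map_S N (fourier Ns) (fourier Ms)) (Stab_Z Ns)"
      using 1[of "fst x" "snd x"] by simp
  qed
  moreover have "Map_P N (fourier Ns) (fourier Ms) = pair_set_prod (Stab_Z Ms) (Map_S N (fourier Ns) (fourier Ms))"
  proof (rule Set.set_eqI)
    fix x show "x \<in> Map_P N (fourier Ns) (fourier Ms) \<longleftrightarrow> x \<in> pair_set_prod (Stab_Z Ms) (Map_S N (fourier Ns) (fourier Ms))"
      using 2[of "fst x" "snd x"] by simp
  qed
  ultimately show ?thesis ..
qed

end

theorem lemma4p22:
  fixes Ns Ms :: "nat list" and N :: nat
  assumes "\<forall>n\<in>set Ns. n \<ge> 1" and "\<forall>n\<in>set Ms. n \<ge> 1"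
    and "N = prod_list Ns" and "N = prod_list Ms"
  shows "((\<exists>S\<in>enphased_perm_mats N. \<exists>T\<in>enphased_perm_mats N. fourier Ms = pair_act S T (fourier Ns))
            \<longleftrightarrow> (\<exists>P\<in>perm_mats N. \<exists>R\<in>perm_mats N. fourier Ms = pair_act P R (fourier Ns)))
       \<and> ((\<exists>P\<in>perm_mats N. \<exists>R\<in>perm_mats N. fourier Ms = pair_act P R (fourier Ns))
            \<longleftrightarrow> idx_group Ns \<cong> idx_group Ms)
       \<and> ((\<exists>S\<in>enphased_perm_mats N. \<exists>T\<in>enphased_perm_mats N. fourier Ms = pair_act S T (fourier Ns))
       \<longrightarrow> Map_P N (fourier Ns) (fourier Ms) = pair_set_prod (Map_S N (fourier Ns) (fourier Ms)) (Stab_Z Ns)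
         \<and> Map_P N (fourier Ns) (fourier Ms) = pair_set_prod (Stab_Z Ms) (Map_S N (fourier Ns) (fourier Ms)))"
proof -
  have a: "allpos Ns" "allpos Ms" using assms(1,2) unfolding allpos_def by auto
  show ?thesis
    using partA1[OF a assms(3,4)] partA2[OF a assms(3,4)] partB[OF a assms(3,4)] by blast
qed

end
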